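(* Let $G=\langle S\mid R\rangle$ be a finite group presentation. If $G$ is $k$-chordal with respect to $S$ for some $k$, then $\langle S\mid R\rangle$ admits a recursive isoperimetric function; consequently, $\langle S\mid R\rangle$ has solvable word problem.
   Context: $S$ and $R\subseteq F(S)$ are finite, $F(S)$ the free group on $S$, and $S^{\pm1}=S\cup S^{-1}\setminus\{e\}$. For $\omega\in F(S)$ representing the identity of $G$, its area $A(\omega)$ is the least $m$ such that $\omega=\prod_{i=1}^m u_ir_i^{\varepsilon_i}u_i^{-1}$ in $F(S)$ with $u_i\in F(S)$, $r_i\in R$, $\varepsilon_i\in\{\pm1\}$. The Dehn function is $\mathrm{Dehn}(n)=\max\{A(\omega):\omega\in\langle\langle R\rangle\rangle,\ |\omega|\le n\}$, where $\langle\langle R\rangle\rangle$ is the normal closure of $R$ in $F(S)$ and $|\omega|$ the word length. An isoperimetric function is a non-decreasing $f:\mathbb{N}\to\mathbb{R}$ with $\mathrm{Dehn}\le f$. A relation $s_1\cdots s_n=e$ in $G$ with $n>2$, $s_i\in S^{\pm1}$, is simple if $s_p\cdots s_q=e$ holds exactly when $(p,q)=(1,n)$. $G$ is $k$-chordal with respect to $S$ if for every simple relation $s_1\cdots s_n=e$ with $n\ge k$ there exist $1\le i<j\le n$ and $s'_1,\dots,s'_r\in S^{\pm1}$ with $s_i\cdots s_j=s'_1\cdots s'_r$ and $r\le\min\{j-i,\,n-j+i-2\}$. *)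

theory Defs
  imports Main "HOL-Library.Nat_Bijection"
begin

text \<open>A letter (a, True) stands for the generator a, (a, False) for its inverse.
  Elements of F(S) are represented by words (lists of letters) up to free equivalence.\<close>

type_synonym 'a word = "('a \<times> bool) list"

definition letters :: "'a set \<Rightarrow> ('a \<times> bool) set" where
  "letters S = S \<times> UNIV"

definition flip :: "'a \<times> bool \<Rightarrow> 'a \<times> bool" where
  "flip x = (fst x, \<not> snd x)"

definition winv :: "'a word \<Rightarrow> 'a word" where
  "winv w = rev (map flip w)"

inductive red1 :: "'a word \<Rightarrow> 'a word \<Rightarrow> bool" where
  "red1 (xs @ [x, flip x] @ ys) (xs @ ys)"

definition free_eq :: "'a word \<Rightarrow> 'a word \<Rightarrow> bool" where
  "free_eq u v = equivclp red1 u v"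

definition conjr :: "'a word \<times> 'a word \<times> bool \<Rightarrow> 'a word" where
  "conjr c = (case c of (u, r, e) \<Rightarrow> u @ (if e then r else winv r) @ winv u)"

definition is_prod_conj :: "'a set \<Rightarrow> 'a word set \<Rightarrow> 'a word \<Rightarrow> nat \<Rightarrow> bool" where
  "is_prod_conj S R w m = (\<exists>cs. length cs = m \<and>
      (\<forall>(u, r, e) \<in> set cs. u \<in> lists (letters S) \<and> r \<in> R) \<and>
      free_eq w (concat (map conjr cs)))"

definition in_ncl :: "'a set \<Rightarrow> 'a word set \<Rightarrow> 'a word \<Rightarrow> bool" where
  "in_ncl S R w = (w \<in> lists (letters S) \<and> (\<exists>m. is_prod_conj S R w m))"

definition area :: "'a set \<Rightarrow> 'a word set \<Rightarrow> 'a word \<Rightarrow> nat" where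
  "area S R w = (LEAST m. is_prod_conj S R w m)"

definition dehn :: "'a set \<Rightarrow> 'a word set \<Rightarrow> nat \<Rightarrow> nat" where
  "dehn S R n = Max {area S R w | w. in_ncl S R w \<and> length w \<le> n}"

definition G_eq :: "'a set \<Rightarrow> 'a word set \<Rightarrow> 'a word \<Rightarrow> 'a word \<Rightarrow> bool" where
  "G_eq S R u v = in_ncl S R (u @ winv v)"

text \<open>Subword s_p ... s_q (1-based, inclusive).\<close>
definition subw :: "'b list \<Rightarrow> nat \<Rightarrow> nat \<Rightarrow> 'b list" where
  "subw s p q = take (Suc q - p) (drop (p - 1) s)"

definition simple_rel :: "'a set \<Rightarrow> 'a word set \<Rightarrow> 'a word \<Rightarrow> bool" where
  "simple_rel S R s = (s \<in> lists (letters S) \<and> length s > 2 \<and>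
     (\<forall>p q. 1 \<le> p \<and> p \<le> q \<and> q \<le> length s \<longrightarrow>
        (G_eq S R (subw s p q) [] \<longleftrightarrow> (p = 1 \<and> q = length s))))"

definition chordal :: "'a set \<Rightarrow> 'a word set \<Rightarrow> nat \<Rightarrow> bool" where
  "chordal S R k = (\<forall>s. simple_rel S R s \<and> length s \<ge> k \<longrightarrow>
     (\<exists>i j s'. 1 \<le> i \<and> i < j \<and> j \<le> length s \<and> s' \<in> lists (letters S) \<and>
        int (length s') \<le> min (int j - int i) (int (length s) - int j + int i - 2) \<and>
        G_eq S R (subw s i j) s'))"

datatype recf = Zr | Sc | Id nat | Cn recf "recf list" | Pr recf recf | Mn recf

inductive reval :: "recf \<Rightarrow> nat list \<Rightarrow> nat \<Rightarrow> bool" where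
  "reval Zr xs 0"
| "reval Sc [x] (Suc x)"
| "i < length xs \<Longrightarrow> reval (Id i) xs (xs ! i)"
| "list_all2 (\<lambda>g y. reval g xs y) gs ys \<Longrightarrow> reval f ys z \<Longrightarrow> reval (Cn f gs) xs z"
| "reval f xs y \<Longrightarrow> reval (Pr f g) (0 # xs) y"
| "reval (Pr f g) (n # xs) y \<Longrightarrow> reval g (n # y # xs) z \<Longrightarrow> reval (Pr f g) (Suc n # xs) z"
| "reval f (n # xs) 0 \<Longrightarrow> (\<forall>m<n. \<exists>y. y > 0 \<and> reval f (m # xs) y) \<Longrightarrow> reval (Mn f) xs n"

definition total_recursive :: "(nat \<Rightarrow> nat) \<Rightarrow> bool" where
  "total_recursive f = (\<exists>t. \<forall>x. reval t [x] (f x))"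

definition decidable_set :: "nat set \<Rightarrow> bool" where
  "decidable_set A = total_recursive (\<lambda>x. if x \<in> A then 1 else 0)"

definition word_code :: "('a \<Rightarrow> nat) \<Rightarrow> 'a word \<Rightarrow> nat" where
  "word_code idx w = list_encode (map (\<lambda>(a, b). 2 * idx a + (if b then 1 else 0)) w)"

definition solvable_word_problem :: "'a set \<Rightarrow> 'a word set \<Rightarrow> bool" where
  "solvable_word_problem S R = (\<forall>idx. inj_on idx S \<longrightarrow>
     decidable_set (word_code idx ` {w. in_ncl S R w}))"

definition isoperimetric :: "'a set \<Rightarrow> 'a word set \<Rightarrow> (nat \<Rightarrow> nat) \<Rightarrow> bool" where
  "isoperimetric S R f = (mono f \<and> (\<forall>n. dehn S R n \<le> f n))"

end

theory Submission
  imports Defs "HOL-Library.Nat_Bijection"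
begin

definition computable :: "nat \<Rightarrow> (nat list \<Rightarrow> nat) \<Rightarrow> bool" where
  "computable n f = (\<exists>t. \<forall>xs. length xs = n \<longrightarrow> reval t xs (f xs))"

lemma computable_cong:
  assumes "computable n f" "\<And>xs. length xs = n \<Longrightarrow> f xs = g xs"
  shows "computable n g"
  using assms unfolding computable_def by metis

lemma computable_zero: "computable n (\<lambda>_. 0)"
  unfolding computable_def by (auto intro: reval.intros)

lemma computable_proj: "i < n \<Longrightarrow> computable n (\<lambda>xs. xs ! i)"
  unfolding computable_def by (auto intro: reval.intros)

lemma computable_suc: "computable 1 (\<lambda>xs. Suc (hd xs))"
  unfolding computable_def
proof (intro exI allI impI)
  fix xs :: "nat list" assume "length xs = 1"
  then obtain x where "xs = [x]" by (cases xs) auto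
  then show "reval Sc xs (Suc (hd xs))" by (auto intro: reval.intros)
qed

lemma ex_progs:
  assumes "\<forall>g\<in>set gs. computable n g"
  shows "\<exists>ts. list_all2 (\<lambda>g t. \<forall>xs. length xs = n \<longrightarrow> reval t xs (g xs)) gs ts"
  using assms
proof (induction gs)
  case Nil then show ?case by auto
next
  case (Cons g gs)
  then obtain ts where "list_all2 (\<lambda>g t. \<forall>xs. length xs = n \<longrightarrow> reval t xs (g xs)) gs ts" by auto
  moreover obtain t where "\<forall>xs. length xs = n \<longrightarrow> reval t xs (g xs)"
    using Cons.prems unfolding computable_def by auto
  ultimately show ?case by (intro exI[of _ "t # ts"]) auto
qed

lemma computable_compose:
  assumes "computable m f" "length gs = m" "\<forall>g\<in>set gs. computable n g"
  shows "computable n (\<lambda>xs. f (map (\<lambda>g. g xs) gs))"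
proof -
  obtain tf where tf: "\<forall>xs. length xs = m \<longrightarrow> reval tf xs (f xs)"
    using assms(1) unfolding computable_def by auto
  obtain ts where ts: "list_all2 (\<lambda>g t. \<forall>xs. length xs = n \<longrightarrow> reval t xs (g xs)) gs ts"
    using ex_progs[OF assms(3)] by auto
  show ?thesis unfolding computable_def
  proof (intro exI[of _ "Cn tf ts"] allI impI)
    fix xs :: "nat list" assume len: "length xs = n"
    have "list_all2 (\<lambda>t y. reval t xs y) ts (map (\<lambda>g. g xs) gs)"
      using ts len by (auto simp: list_all2_conv_all_nth)
    moreover have "reval tf (map (\<lambda>g. g xs) gs) (f (map (\<lambda>g. g xs) gs))"
      using tf assms(2) by auto
    ultimately show "reval (Cn tf ts) xs (f (map (\<lambda>g. g xs) gs))"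
      by (rule reval.intros)
  qed
qed

lemma computable_compose1:
  assumes "computable 1 f" "computable n g"
  shows "computable n (\<lambda>xs. f [g xs])"
  using computable_compose[OF assms(1), of "[g]" n] assms(2) by simp

lemma computable_compose2:
  assumes "computable 2 f" "computable n g" "computable n h"
  shows "computable n (\<lambda>xs. f [g xs, h xs])"
  using computable_compose[OF assms(1), of "[g, h]" n] assms(2,3) by simp

primrec prrec :: "(nat list \<Rightarrow> nat) \<Rightarrow> (nat list \<Rightarrow> nat) \<Rightarrow> nat \<Rightarrow> nat list \<Rightarrow> nat" where
  "prrec f g 0 xs = f xs"
| "prrec f g (Suc k) xs = g (k # prrec f g k xs # xs)"

lemma computable_pr:
  assumes "computable n f" "computable (Suc (Suc n)) g"
  shows "computable (Suc n) (\<lambda>xs. prrec f g (hd xs) (tl xs))"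
proof -
  obtain tf where tf: "\<forall>xs. length xs = n \<longrightarrow> reval tf xs (f xs)"
    using assms(1) unfolding computable_def by auto
  obtain tg where tg: "\<forall>xs. length xs = Suc (Suc n) \<longrightarrow> reval tg xs (g xs)"
    using assms(2) unfolding computable_def by auto
  have main: "reval (Pr tf tg) (k # ys) (prrec f g k ys)" if "length ys = n" for k ys
  proof (induction k)
    case 0 then show ?case using tf that by (auto intro: reval.intros)
  next
    case (Suc k)
    have "reval tg (k # prrec f g k ys # ys) (g (k # prrec f g k ys # ys))"
      using tg that by auto
    with Suc show ?case by (auto intro: reval.intros)
  qed
  show ?thesis unfolding computable_def
  proof (intro exI[of _ "Pr tf tg"] allI impI)
    fix xs :: "nat list" assume "length xs = Suc n"
    then obtain k ys where "xs = k # ys" "length ys = n" by (cases xs) auto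
    then show "reval (Pr tf tg) xs (prrec f g (hd xs) (tl xs))" using main by simp
  qed
qed

lemma computable_plus: "computable 2 (\<lambda>xs. xs ! 0 + xs ! 1)"
proof -
  have g: "computable 3 (\<lambda>ys. Suc (hd [ys ! 1]))"
    using computable_compose1[OF computable_suc computable_proj[of 1 3]] by simp
  have c: "computable (Suc 1) (\<lambda>xs. prrec (\<lambda>xs. xs ! 0) (\<lambda>ys. Suc (hd [ys ! 1])) (hd xs) (tl xs))"
    by (rule computable_pr) (use computable_proj[of 0 1] g in \<open>auto simp: numeral_eq_Suc\<close>)
  have e: "prrec (\<lambda>xs. xs ! 0) (\<lambda>ys. Suc (hd [ys ! 1])) k ys = k + ys ! 0" for k ys
    by (induction k) auto
  have "computable (Suc 1) (\<lambda>xs. xs ! 0 + xs ! 1)"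
    apply (rule computable_cong[OF c])
    apply (auto simp: length_Suc_conv)
    subgoal for y ya by (induction y) auto
    done
  then show ?thesis by (simp add: numeral_2_eq_2)
qed


lemma computable_const: "computable n (\<lambda>_. c)"
proof (induction c)
  case 0 then show ?case by (rule computable_zero)
next
  case (Suc c)
  from computable_compose1[OF computable_suc Suc] show ?case by simp
qed

lemma computable_push:
  assumes "computable (Suc n) F" "computable n G"
  shows "computable n (\<lambda>xs. F (G xs # xs))"
proof -
  have "computable n (\<lambda>xs. F (map (\<lambda>g. g xs) (G # map (\<lambda>i xs. xs ! i) [0..<n])))"
    by (rule computable_compose[OF assms(1)]) (auto intro: assms(2) computable_proj)
  then show ?thesis
    apply (rule computable_cong)
    apply (simp add: comp_def)
    using map_nth by metis
qed

lemma map_drop2: "length ys = Suc (Suc n) \<Longrightarrow> map (\<lambda>i. ys ! Suc (Suc i)) [0..<n] = drop 2 ys"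
  by (rule nth_equalityI) (auto simp: add.commute)

datatype aexp = C nat | V nat | BSum aexp aexp | Rec aexp aexp aexp
  | P1 "nat \<Rightarrow> nat" aexp | P2 "nat \<Rightarrow> nat \<Rightarrow> nat" aexp aexp

primrec iter :: "nat \<Rightarrow> (nat \<Rightarrow> nat \<Rightarrow> nat) \<Rightarrow> nat \<Rightarrow> nat" where
  "iter b st 0 = b"
| "iter b st (Suc k) = st k (iter b st k)"

primrec eval :: "aexp \<Rightarrow> nat list \<Rightarrow> nat" where
  "eval (C c) xs = c"
| "eval (V i) xs = (if i < length xs then xs ! i else 0)"
| "eval (BSum b e) xs = (\<Sum>y<eval b xs. eval e (y # xs))"
| "eval (Rec a b s) xs = iter (eval b xs) (\<lambda>k r. eval s (k # r # xs)) (eval a xs)"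
| "eval (P1 f a) xs = f (eval a xs)"
| "eval (P2 f a b) xs = f (eval a xs) (eval b xs)"

primrec okp :: "aexp \<Rightarrow> bool" where
  "okp (C c) = True"
| "okp (V i) = True"
| "okp (BSum b e) = (okp b \<and> okp e)"
| "okp (Rec a b s) = (okp a \<and> okp b \<and> okp s)"
| "okp (P1 f a) = (computable 1 (\<lambda>xs. f (xs ! 0)) \<and> okp a)"
| "okp (P2 f a b) = (computable 2 (\<lambda>xs. f (xs ! 0) (xs ! 1)) \<and> okp a \<and> okp b)"

lemma compile: "okp e \<Longrightarrow> computable n (eval e)"
proof (induction e arbitrary: n)
  case (C c) then show ?case using computable_const[of n c] by (simp add: eval_def)
next
  case (V i)
  show ?case
  proof (cases "i < n")
    case True
    show ?thesis by (rule computable_cong[OF computable_proj[OF True]]) (use True in auto)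
  next
    case False
    show ?thesis by (rule computable_cong[OF computable_zero]) (use False in simp)
  qed
next
  case (BSum b e)
  have g1: "computable (Suc (Suc n)) (\<lambda>ys. eval e (ys ! 0 # drop 2 ys))"
  proof -
    have "computable (Suc (Suc n)) (\<lambda>ys. eval e (map (\<lambda>g. g ys)
        ((\<lambda>ys. ys ! 0) # map (\<lambda>i ys. ys ! (i + 2)) [0..<n])))"
      by (rule computable_compose[of "Suc n"]) (use BSum in \<open>auto intro: computable_proj\<close>)
    then show ?thesis
      by (rule computable_cong) (simp add: comp_def map_drop2)
  qed
  have g: "computable (Suc (Suc n)) (\<lambda>ys. ys ! Suc 0 + eval e (ys ! 0 # drop 2 ys))"
    using computable_compose2[OF computable_plus computable_proj[of "Suc 0" "Suc (Suc n)"] g1] by simp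
  have pr: "computable (Suc n) (\<lambda>xs. prrec (\<lambda>_. 0) (\<lambda>ys. ys ! Suc 0 + eval e (ys ! 0 # drop 2 ys)) (hd xs) (tl xs))"
    by (rule computable_pr[OF computable_zero g])
  have eq: "prrec (\<lambda>_. 0) (\<lambda>ys. ys ! Suc 0 + eval e (ys ! 0 # drop 2 ys)) k xs = (\<Sum>y<k. eval e (y # xs))" for k xs
    by (induction k) auto
  show ?case
    using computable_push[OF pr BSum.IH(1)] BSum.prems by (simp add: eq)
next
  case (Rec a b s)
  have pr: "computable (Suc n) (\<lambda>xs. prrec (eval b) (eval s) (hd xs) (tl xs))"
    by (rule computable_pr) (use Rec in auto)
  have eq: "prrec (eval b) (eval s) k xs = iter (eval b xs) (\<lambda>k r. eval s (k # r # xs)) k" for k xs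
    by (induction k) auto
  show ?case
    using computable_push[OF pr, of "eval a"] Rec by (simp add: eq)
next
  case (P1 f a)
  then show ?case using computable_compose1[of "\<lambda>xs. f (xs ! 0)" n "eval a"] by simp
next
  case (P2 f a b)
  then show ?case using computable_compose2[of "\<lambda>xs. f (xs ! 0) (xs ! 1)" n "eval a" "eval b"] by simp
qed

lemma computable1_aexp:
  assumes "okp e" "\<And>x. eval e [x] = f x"
  shows "computable 1 (\<lambda>xs. f (xs ! 0))"
  by (rule computable_cong[OF compile[OF assms(1)]]) (auto simp: assms(2) length_Suc_conv)

lemma computable2_aexp:
  assumes "okp e" "\<And>x y. eval e [x, y] = f x y"
  shows "computable 2 (\<lambda>xs. f (xs ! 0) (xs ! 1))"
  by (rule computable_cong[OF compile[OF assms(1)]]) (auto simp: assms(2) numeral_2_eq_2 length_Suc_conv)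


declare One_nat_def [simp del]

lemma iter_pred: "iter 0 (\<lambda>k r. k) x = x - 1"
  by (cases x) auto

lemma comp_pred: "computable 1 (\<lambda>xs. xs ! 0 - 1)"
  by (rule computable1_aexp[of "Rec (V 0) (C 0) (V 0)"]) (auto simp: iter_pred)

lemma iter_minus: "iter x (\<lambda>k r. r - 1) y = x - y"
  by (induction y) auto

lemma comp_minus: "computable 2 (\<lambda>xs. xs ! 0 - xs ! 1)"
  by (rule computable2_aexp[of "Rec (V 1) (V 0) (P1 (\<lambda>x. x - 1) (V 1))"])
     (auto simp: iter_minus comp_pred)

lemma iter_times: "iter 0 (\<lambda>k r. r + y) x = x * y"
  by (induction x) auto

lemma comp_plus: "computable 2 (\<lambda>xs. xs ! 0 + xs ! 1)"
  by (rule computable_plus)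

lemma comp_times: "computable 2 (\<lambda>xs. xs ! 0 * xs ! 1)"
  by (rule computable2_aexp[of "Rec (V 0) (C 0) (P2 (+) (V 1) (V 3))"])
     (auto simp: iter_times comp_plus)

lemma iter_pow: "iter 1 (\<lambda>k r. r * x) y = x ^ y"
  by (induction y) auto

lemma comp_pow: "computable 2 (\<lambda>xs. xs ! 0 ^ xs ! 1)"
  by (rule computable2_aexp[of "Rec (V 1) (C 1) (P2 (*) (V 1) (V 2))"])
     (auto simp: iter_pow comp_times)

lemma div_as_sum:
  "(1 - (1 - y)) * (\<Sum>q<x. 1 - ((q + 1) * y - x)) = x div (y::nat)"
proof (cases "y = 0")
  case True then show ?thesis by simp
next
  case False
  have y1: "1 - (1 - y) = 1" using False by simp
  have "(\<Sum>q<x. 1 - ((q + 1) * y - x)) = (\<Sum>q<x. if (q + 1) * y \<le> x then 1 else 0)"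
    by (rule sum.cong) auto
  also have "\<dots> = card {q \<in> {..<x}. (q + 1) * y \<le> x}"
    by (simp add: sum.inter_filter[symmetric])
  also have "{q \<in> {..<x}. (q + 1) * y \<le> x} = {..<x div y}"
  proof (rule set_eqI)
    fix q
    have iff: "(q + 1) * y \<le> x \<longleftrightarrow> q < x div y"
      using False less_eq_div_iff_mult_less_eq[of y "q+1" x] by linarith
    have "x div y \<le> x" by (rule div_le_dividend)
    then have "q < x div y \<Longrightarrow> q < x" by linarith
    then show "q \<in> {q \<in> {..<x}. (q + 1) * y \<le> x} \<longleftrightarrow> q \<in> {..<x div y}"
      using iff by auto
  qed
  also have "card {..<x div y} = x div y" by simp
  finally show ?thesis using y1 by simp
qed

lemma comp_div: "computable 2 (\<lambda>xs. xs ! 0 div xs ! 1)"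
  by (rule computable2_aexp[of "P2 (*) (P2 (-) (C 1) (P2 (-) (C 1) (V 1)))
       (BSum (V 0) (P2 (-) (C 1) (P2 (-) (P2 (*) (P2 (+) (V 0) (C 1)) (V 2)) (V 1))))"])
     (auto simp: comp_times comp_minus comp_plus div_as_sum)

lemma comp_mod: "computable 2 (\<lambda>xs. xs ! 0 mod xs ! 1)"
  by (rule computable2_aexp[of "P2 (-) (V 0) (P2 (*) (V 1) (P2 (div) (V 0) (V 1)))"])
     (auto simp: comp_times comp_minus comp_div minus_mult_div_eq_mod)

lemmas comp_arith = comp_plus comp_minus comp_times comp_pow comp_div comp_mod

definition "SgnE a = P2 (-) (C 1) (P2 (-) (C 1) a)"
definition "NotE a = P2 (-) (C 1) a"
definition "LtE a b = SgnE (P2 (-) b a)"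
definition "LeE a b = NotE (P2 (-) a b)"
definition "AndE a b = P2 (*) (SgnE a) (SgnE b)"
definition "OrE a b = SgnE (P2 (+) a b)"
definition "ExE b e = SgnE (BSum b e)"
definition "AllE b e = NotE (BSum b (NotE e))"
definition "EqE a b = AndE (LeE a b) (LeE b a)"
definition "IfE c a b = P2 (+) (P2 (*) (SgnE c) a) (P2 (*) (NotE c) b)"

lemma okp_comb [simp]:
  "okp (SgnE a) = okp a" "okp (NotE a) = okp a" "okp (LtE a b) = (okp a \<and> okp b)"
  "okp (LeE a b) = (okp a \<and> okp b)" "okp (AndE a b) = (okp a \<and> okp b)"
  "okp (OrE a b) = (okp a \<and> okp b)" "okp (ExE b e) = (okp b \<and> okp e)"
  "okp (AllE b e) = (okp b \<and> okp e)" "okp (EqE a b) = (okp a \<and> okp b)"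
  "okp (IfE c a b) = (okp c \<and> okp a \<and> okp b)"
  by (auto simp: SgnE_def NotE_def LtE_def LeE_def AndE_def OrE_def ExE_def AllE_def EqE_def IfE_def
      comp_arith)

lemma sum_ne0: "(\<Sum>y<(n::nat). f y) \<noteq> (0::nat) \<longleftrightarrow> (\<exists>y<n. f y \<noteq> 0)"
proof -
  have "(\<Sum>y<n. f y) = (0::nat) \<longleftrightarrow> (\<forall>y<n. f y = 0)" by auto
  then show ?thesis by auto
qed

lemma sum_ne0': "(\<Sum>y<(n::nat). if f y = 0 then 1 else 0) = (0::nat) \<longleftrightarrow> (\<forall>y<n. f y \<noteq> 0)"
  by auto

lemma eval_comb [simp]:
  "eval (SgnE a) xs = (if eval a xs \<noteq> 0 then 1 else 0)"
  "eval (NotE a) xs = (if eval a xs = 0 then 1 else 0)"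
  "eval (LtE a b) xs = (if eval a xs < eval b xs then 1 else 0)"
  "eval (LeE a b) xs = (if eval a xs \<le> eval b xs then 1 else 0)"
  "eval (AndE a b) xs = (if eval a xs \<noteq> 0 \<and> eval b xs \<noteq> 0 then 1 else 0)"
  "eval (OrE a b) xs = (if eval a xs \<noteq> 0 \<or> eval b xs \<noteq> 0 then 1 else 0)"
  "eval (EqE a b) xs = (if eval a xs = eval b xs then 1 else 0)"
  "eval (IfE c a b) xs = (if eval c xs \<noteq> 0 then eval a xs else eval b xs)"
  by (simp_all add: SgnE_def NotE_def LtE_def LeE_def AndE_def OrE_def EqE_def IfE_def One_nat_def) linarith

lemma eval_ExE [simp]:
  "eval (ExE b e) xs = (if \<exists>y<eval b xs. eval e (y # xs) \<noteq> 0 then 1 else 0)"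
proof -
  have "eval (ExE b e) xs = (if (\<Sum>y<eval b xs. eval e (y # xs)) \<noteq> 0 then 1 else 0)"
    by (simp add: ExE_def)
  then show ?thesis by (simp only: sum_ne0)
qed

lemma eval_AllE [simp]:
  "eval (AllE b e) xs = (if \<forall>y<eval b xs. eval e (y # xs) \<noteq> 0 then 1 else 0)"
  unfolding AllE_def by (simp del: sum_eq_0_iff add: sum_ne0')


declare One_nat_def [simp del]

lemma if01_simps [simp]:
  "((0::nat) < (if P then 1 else 0)) = P"
  "((if P then 1 else 0) \<noteq> (0::nat)) = P"
  "((if P then 1 else 0) = (0::nat)) = (\<not> P)"
  by auto

lemma tot_rec: "computable 1 (\<lambda>xs. f (xs ! 0)) \<Longrightarrow> total_recursive f"
  unfolding computable_def total_recursive_def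
  by (metis One_nat_def length_Cons list.size(3) nth_Cons_0)

lemma comp_aexp1:
  assumes "okp e" "\<And>x. eval e [x] = f x" shows "computable 1 (\<lambda>xs. f (xs ! 0))"
  using computable1_aexp assms by blast

lemma comp_aexp2:
  assumes "okp e" "\<And>x y. eval e [x, y] = f x y" shows "computable 2 (\<lambda>xs. f (xs ! 0) (xs ! 1))"
  using computable2_aexp assms by blast

definition lenN :: "nat \<Rightarrow> nat \<Rightarrow> nat" where
  "lenN B v = (\<Sum>l<v. if B ^ (l + 1) \<le> v then 1 else 0)"

lemma comp_lenN [simp]: "computable 1 (\<lambda>xs. lenN B (xs ! 0))"
  by (rule comp_aexp1[of "BSum (V 0) (LeE (P2 (^) (C B) (P2 (+) (V 0) (C 1))) (V 1))"])
     (auto simp: comp_arith lenN_def)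

definition digN :: "nat \<Rightarrow> nat \<Rightarrow> nat \<Rightarrow> nat" where
  "digN B v k = v div B ^ (lenN B v - 1 - k) mod B"

lemma comp_digN [simp]: "computable 2 (\<lambda>xs. digN B (xs ! 0) (xs ! 1))"
  by (rule comp_aexp2[of "P2 (mod) (P2 (div) (V 0) (P2 (^) (C B)
       (P2 (-) (P2 (-) (P1 (lenN B) (V 0)) (C 1)) (V 1)))) (C B)"])
     (auto simp: comp_arith digN_def)

definition ccN :: "nat \<Rightarrow> nat \<Rightarrow> nat \<Rightarrow> nat" where
  "ccN B a b = a * B ^ lenN B b + (b - B ^ lenN B b)"

lemma comp_ccN [simp]: "computable 2 (\<lambda>xs. ccN B (xs ! 0) (xs ! 1))"
  by (rule comp_aexp2[of "P2 (+) (P2 (*) (V 0) (P2 (^) (C B) (P1 (lenN B) (V 1))))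
       (P2 (-) (V 1) (P2 (^) (C B) (P1 (lenN B) (V 1))))"])
     (auto simp: comp_arith ccN_def)

definition bitN :: "nat \<Rightarrow> nat \<Rightarrow> nat" where
  "bitN h c = h div 2 ^ c mod 2"

lemma comp_bitN [simp]: "computable 2 (\<lambda>xs. bitN (xs ! 0) (xs ! 1))"
  by (rule comp_aexp2[of "P2 (mod) (P2 (div) (V 0) (P2 (^) (C 2) (V 1))) (C 2)"])
     (auto simp: comp_arith bitN_def)

definition flN :: "nat \<Rightarrow> nat" where
  "flN d = d + 1 - 2 * (d mod 2)"

lemma comp_flN [simp]: "computable 1 (\<lambda>xs. flN (xs ! 0))"
  by (rule comp_aexp1[of "P2 (-) (P2 (+) (V 0) (C 1)) (P2 (*) (C 2) (P2 (mod) (V 0) (C 2)))"])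
     (auto simp: comp_arith flN_def)

definition validN :: "nat \<Rightarrow> nat \<Rightarrow> nat \<Rightarrow> nat" where
  "validN B Q v = (if 1 \<le> v \<and> v < 2 * B ^ lenN B v \<and>
      (\<forall>k<lenN B v. bitN Q (digN B v k) \<noteq> 0) then 1 else 0)"

lemma comp_validN [simp]: "computable 1 (\<lambda>xs. validN B Q (xs ! 0))"
  by (rule comp_aexp1[of "AndE (LeE (C 1) (V 0)) (AndE (LtE (V 0) (P2 (*) (C 2) (P2 (^) (C B) (P1 (lenN B) (V 0)))))
       (AllE (P1 (lenN B) (V 0)) (P2 bitN (C Q) (P2 (digN B) (V 1) (V 0)))))"])
     (auto simp: comp_arith validN_def)

definition winvN :: "nat \<Rightarrow> nat \<Rightarrow> nat \<Rightarrow> nat" where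
  "winvN B e t = (if lenN B e = lenN B t \<and>
      (\<forall>k<lenN B e. digN B t k = flN (digN B e (lenN B e - 1 - k))) then 1 else 0)"

lemma comp_winvN [simp]: "computable 2 (\<lambda>xs. winvN B (xs ! 0) (xs ! 1))"
  by (rule comp_aexp2[of "AndE (EqE (P1 (lenN B) (V 0)) (P1 (lenN B) (V 1)))
       (AllE (P1 (lenN B) (V 0)) (EqE (P2 (digN B) (V 2) (V 0))
          (P1 flN (P2 (digN B) (V 1) (P2 (-) (P2 (-) (P1 (lenN B) (V 1)) (C 1)) (V 0))))))"])
     (auto simp: comp_arith winvN_def)

definition bdN :: "nat \<Rightarrow> nat \<Rightarrow> nat" where
  "bdN B v = B ^ (lenN B v + 1)"

lemma comp_bdN [simp]: "computable 1 (\<lambda>xs. bdN B (xs ! 0))"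
  by (rule comp_aexp1[of "P2 (^) (C B) (P2 (+) (P1 (lenN B) (V 0)) (C 1))"])
     (auto simp: comp_arith bdN_def)

definition FN :: "nat \<Rightarrow> nat \<Rightarrow> nat \<Rightarrow> nat \<Rightarrow> nat \<Rightarrow> nat \<Rightarrow> nat" where
  "FN B K Q Q0 v h = (if validN B Q v \<noteq> 0 \<and> ((lenN B v < K \<and> bitN Q0 v \<noteq> 0) \<or>
     (\<exists>x<bdN B v. \<exists>y<bdN B v. \<exists>z<bdN B v. \<exists>e<bdN B v. \<exists>t<bdN B v.
        validN B Q x \<noteq> 0 \<and> validN B Q y \<noteq> 0 \<and> validN B Q z \<noteq> 0 \<and> validN B Q e \<noteq> 0 \<and>
        validN B Q t \<noteq> 0 \<and> v = ccN B (ccN B x y) z \<and> lenN B e < lenN B y \<and>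
        lenN B e + lenN B y < lenN B v \<and> winvN B e t \<noteq> 0 \<and>
        bitN h (ccN B y t) \<noteq> 0 \<and> bitN h (ccN B (ccN B x e) z) \<noteq> 0)) then 1 else 0)"

definition FE :: "nat \<Rightarrow> nat \<Rightarrow> nat \<Rightarrow> nat \<Rightarrow> aexp" where
  "FE B K Q Q0 = AndE (P1 (validN B Q) (V 0))
    (OrE (AndE (LtE (P1 (lenN B) (V 0)) (C K)) (P2 bitN (C Q0) (V 0)))
     (ExE (P1 (bdN B) (V 0)) (ExE (P1 (bdN B) (V 1)) (ExE (P1 (bdN B) (V 2))
      (ExE (P1 (bdN B) (V 3)) (ExE (P1 (bdN B) (V 4))
        (AndE (P1 (validN B Q) (V 4)) (AndE (P1 (validN B Q) (V 3)) (AndE (P1 (validN B Q) (V 2))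
        (AndE (P1 (validN B Q) (V 1)) (AndE (P1 (validN B Q) (V 0))
        (AndE (EqE (V 5) (P2 (ccN B) (P2 (ccN B) (V 4) (V 3)) (V 2)))
        (AndE (LtE (P1 (lenN B) (V 1)) (P1 (lenN B) (V 3)))
        (AndE (LtE (P2 (+) (P1 (lenN B) (V 1)) (P1 (lenN B) (V 3))) (P1 (lenN B) (V 5)))
        (AndE (P2 (winvN B) (V 1) (V 0))
        (AndE (P2 bitN (V 6) (P2 (ccN B) (V 3) (V 0)))
        (P2 bitN (V 6) (P2 (ccN B) (P2 (ccN B) (V 4) (V 1)) (V 2)))))))))))))))))))"

lemma okp_FE: "okp (FE B K Q Q0)"
  by (simp add: FE_def comp_arith)

definition holds :: "aexp \<Rightarrow> nat list \<Rightarrow> bool" where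
  "holds e xs = (eval e xs \<noteq> 0)"

lemma holds_simps:
  "holds (AndE a b) xs = (holds a xs \<and> holds b xs)"
  "holds (OrE a b) xs = (holds a xs \<or> holds b xs)"
  "holds (LtE a b) xs = (eval a xs < eval b xs)"
  "holds (EqE a b) xs = (eval a xs = eval b xs)"
  "holds (ExE b e) xs = (\<exists>y<eval b xs. holds e (y # xs))"
  "holds (P1 f a) xs = (f (eval a xs) \<noteq> 0)"
  "holds (P2 g a b) xs = (g (eval a xs) (eval b xs) \<noteq> 0)"
  by (auto simp: holds_def)

lemma eval_AndE_holds: "eval (AndE a b) xs = (if holds (AndE a b) xs then 1 else 0)"
  by (simp add: holds_def)

lemma eval_FE: "eval (FE B K Q Q0) [v, h] = FN B K Q Q0 v h"
  unfolding FN_def FE_def eval_AndE_holds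
  by (simp add: holds_simps del: eval_comb eval_ExE eval_AllE)

lemma comp_FN [simp]: "computable 2 (\<lambda>xs. FN B K Q Q0 (xs ! 0) (xs ! 1))"
  by (rule comp_aexp2[OF okp_FE eval_FE])

definition HN :: "nat \<Rightarrow> nat \<Rightarrow> nat \<Rightarrow> nat \<Rightarrow> nat \<Rightarrow> nat" where
  "HN B K Q Q0 v = iter 0 (\<lambda>k r. r + FN B K Q Q0 k r * 2 ^ k) v"

lemma comp_HN [simp]: "computable 1 (\<lambda>xs. HN B K Q Q0 (xs ! 0))"
  by (rule comp_aexp1[of "Rec (V 0) (C 0) (P2 (+) (V 1) (P2 (*) (P2 (FN B K Q Q0) (V 0) (V 1)) (P2 (^) (C 2) (V 0))))"])
     (auto simp: comp_arith HN_def)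

definition TN :: "nat \<Rightarrow> nat \<Rightarrow> nat \<Rightarrow> nat \<Rightarrow> nat \<Rightarrow> nat" where
  "TN B K Q Q0 v = FN B K Q Q0 v (HN B K Q Q0 v)"

lemma comp_TN [simp]: "computable 1 (\<lambda>xs. TN B K Q Q0 (xs ! 0))"
  by (rule comp_aexp1[of "P2 (FN B K Q Q0) (V 0) (P1 (HN B K Q Q0) (V 0))"])
     (auto simp: TN_def)

definition peN :: "nat \<Rightarrow> nat \<Rightarrow> nat" where
  "peN a b = (a + b) * (a + b + 1) div 2 + a"

lemma comp_peN [simp]: "computable 2 (\<lambda>xs. peN (xs ! 0) (xs ! 1))"
  by (rule comp_aexp2[of "P2 (+) (P2 (div) (P2 (*) (P2 (+) (V 0) (V 1)) (P2 (+) (P2 (+) (V 0) (V 1)) (C 1))) (C 2)) (V 0)"])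
     (auto simp: comp_arith peN_def)

definition fstN :: "nat \<Rightarrow> nat" where
  "fstN c = (\<Sum>a<c + 1. \<Sum>b<c + 1. if peN a b = c then a else 0)"

definition sndN :: "nat \<Rightarrow> nat" where
  "sndN c = (\<Sum>a<c + 1. \<Sum>b<c + 1. if peN a b = c then b else 0)"

lemma comp_fstN [simp]: "computable 1 (\<lambda>xs. fstN (xs ! 0))"
  by (rule comp_aexp1[of "BSum (P2 (+) (V 0) (C 1)) (BSum (P2 (+) (V 1) (C 1))
       (IfE (EqE (P2 peN (V 1) (V 0)) (V 2)) (V 1) (C 0)))"])
     (auto simp: comp_arith fstN_def cong: if_cong)

lemma comp_sndN [simp]: "computable 1 (\<lambda>xs. sndN (xs ! 0))"
  by (rule comp_aexp1[of "BSum (P2 (+) (V 0) (C 1)) (BSum (P2 (+) (V 1) (C 1))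
       (IfE (EqE (P2 peN (V 1) (V 0)) (V 2)) (V 0) (C 0)))"])
     (auto simp: comp_arith sndN_def cong: if_cong)

definition curN :: "nat \<Rightarrow> nat \<Rightarrow> nat" where
  "curN c k = iter c (\<lambda>i r. sndN (r - 1)) k"

lemma comp_curN [simp]: "computable 2 (\<lambda>xs. curN (xs ! 0) (xs ! 1))"
  by (rule comp_aexp2[of "Rec (V 1) (V 0) (P1 sndN (P2 (-) (V 1) (C 1)))"])
     (auto simp: comp_arith curN_def)

definition accN :: "nat \<Rightarrow> nat \<Rightarrow> nat \<Rightarrow> nat" where
  "accN B c k = iter 1 (\<lambda>i r. if curN c i = 0 then r else r * B + fstN (curN c i - 1)) k"

lemma comp_accN [simp]: "computable 2 (\<lambda>xs. accN B (xs ! 0) (xs ! 1))"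
  by (rule comp_aexp2[of "Rec (V 1) (C 1) (IfE (EqE (P2 curN (V 2) (V 0)) (C 0)) (V 1)
       (P2 (+) (P2 (*) (V 1) (C B)) (P1 fstN (P2 (-) (P2 curN (V 2) (V 0)) (C 1)))))"])
     (auto simp: comp_arith accN_def cong: if_cong)

definition vlN :: "nat \<Rightarrow> nat \<Rightarrow> nat" where
  "vlN Q c = (if \<forall>k<c + 1. curN c k = 0 \<or> bitN Q (fstN (curN c k - 1)) \<noteq> 0 then 1 else 0)"

lemma comp_vlN [simp]: "computable 1 (\<lambda>xs. vlN Q (xs ! 0))"
  by (rule comp_aexp1[of "AllE (P2 (+) (V 0) (C 1)) (OrE (EqE (P2 curN (V 1) (V 0)) (C 0))
       (P2 bitN (C Q) (P1 fstN (P2 (-) (P2 curN (V 1) (V 0)) (C 1)))))"])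
     (auto simp: comp_arith vlN_def)

definition decN :: "nat \<Rightarrow> nat \<Rightarrow> nat \<Rightarrow> nat \<Rightarrow> nat \<Rightarrow> nat" where
  "decN B K Q Q0 c = (if vlN Q c \<noteq> 0 \<and> TN B K Q Q0 (accN B c c) \<noteq> 0 then 1 else 0)"

lemma comp_decN: "total_recursive (decN B K Q Q0)"
  apply (rule tot_rec)
  by (rule comp_aexp1[of "AndE (P1 (vlN Q) (V 0)) (P1 (TN B K Q Q0) (P2 (accN B) (V 0) (V 0)))"])
     (auto simp: decN_def)


declare One_nat_def [simp del]

definition valB :: "nat \<Rightarrow> nat list \<Rightarrow> nat" where
  "valB B ds = foldl (\<lambda>a d. a * B + d) 0 ds"

definition encB :: "nat \<Rightarrow> nat list \<Rightarrow> nat" where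
  "encB B ds = foldl (\<lambda>a d. a * B + d) 1 ds"

lemma foldl_gen: "foldl (\<lambda>a d. a * (B::nat) + d) s ds = s * B ^ length ds + foldl (\<lambda>a d. a * B + d) 0 ds"
proof (induction ds arbitrary: s)
  case Nil then show ?case by (simp add: One_nat_def)
next
  case (Cons d ds)
  have "foldl (\<lambda>a d. a * B + d) s (d # ds) = (s * B + d) * B ^ length ds + foldl (\<lambda>a d. a * B + d) 0 ds"
    using Cons[of "s * B + d"] by simp
  moreover have "foldl (\<lambda>a d. a * B + d) 0 (d # ds) = d * B ^ length ds + foldl (\<lambda>a d. a * B + d) 0 ds"
    using Cons[of d] by simp
  ultimately show ?case by (simp add: algebra_simps)
qed

lemma encB_val: "encB B ds = B ^ length ds + valB B ds"
  unfolding encB_def valB_def by (subst foldl_gen) simp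

lemma valB_append: "valB B (a @ b) = valB B a * B ^ length b + valB B b"
  unfolding valB_def by (simp add: foldl_gen[of B "foldl _ 0 a"])

lemma valB_snoc: "valB B (a @ [d]) = valB B a * B + d"
  unfolding valB_def by simp

lemma encB_snoc: "encB B (a @ [d]) = encB B a * B + d"
  unfolding encB_def by simp

lemma valB_bound: "\<forall>d\<in>set ds. d < B \<Longrightarrow> valB B ds < B ^ length ds"
proof (induction ds rule: rev_induct)
  case Nil then show ?case by (simp add: valB_def)
next
  case (snoc d ds)
  then have a: "valB B ds + 1 \<le> B ^ length ds" "d < B" by auto
  have "(valB B ds + 1) * B \<le> B ^ length ds * B" using a(1) by (rule mult_le_mono1)
  moreover have "(valB B ds + 1) * B = valB B ds * B + B" by (simp add: algebra_simps)
  ultimately have "valB B ds * B + d < B ^ length ds * B" using a(2) by linarith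
  then show ?case by (simp add: valB_snoc mult.commute)
qed

context
  fixes B :: nat
  assumes B2: "2 \<le> B"
begin

lemma lenN_eq:
  assumes "B ^ n \<le> v" "v < B ^ (n + 1)"
  shows "lenN B v = n"
proof -
  have n_less: "n < B ^ n"
  proof -
    have "n < 2 ^ n" by (rule less_exp)
    also have "2 ^ n \<le> B ^ n" using B2 by (rule power_mono) simp
    finally show ?thesis .
  qed
  have iff: "B ^ (l + 1) \<le> v \<longleftrightarrow> l < n" for l
  proof
    assume "B ^ (l + 1) \<le> v"
    then have "B ^ (l + 1) < B ^ (n + 1)" using assms by linarith
    then have "l + 1 < n + 1" using B2 by (simp add: power_strict_increasing_iff)
    then show "l < n" by simp
  next
    assume "l < n"
    then have "B ^ (l + 1) \<le> B ^ n" using B2 by (intro power_increasing) auto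
    then show "B ^ (l + 1) \<le> v" using assms by linarith
  qed
  have "lenN B v = (\<Sum>l<v. if l < n then 1 else 0)"
    unfolding lenN_def by (rule sum.cong) (auto simp: iff)
  also have "\<dots> = card {l \<in> {..<v}. l < n}"
    by (simp add: sum.inter_filter[symmetric])
  also have "{l \<in> {..<v}. l < n} = {..<n}" using n_less assms by auto
  finally show ?thesis by simp
qed

lemma encB_bounds:
  assumes "\<forall>d\<in>set ds. d < B"
  shows "B ^ length ds \<le> encB B ds" "encB B ds < 2 * B ^ length ds" "encB B ds < B ^ (length ds + 1)"
proof -
  have v: "valB B ds < B ^ length ds" by (rule valB_bound[OF assms])
  show "B ^ length ds \<le> encB B ds" by (simp add: encB_val)
  show "encB B ds < 2 * B ^ length ds" using v by (simp add: encB_val)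
  have "B ^ (length ds + 1) = B ^ length ds * B" by (simp add: power_add)
  moreover have "B ^ length ds * 2 \<le> B ^ length ds * B" using B2 by (rule mult_le_mono2)
  ultimately have "2 * B ^ length ds \<le> B ^ (length ds + 1)" by (simp add: mult.commute)
  then show "encB B ds < B ^ (length ds + 1)" using v by (simp add: encB_val)
qed

lemma lenN_encB: "\<forall>d\<in>set ds. d < B \<Longrightarrow> lenN B (encB B ds) = length ds"
  using encB_bounds lenN_eq by blast

lemma digN_encB:
  assumes "\<forall>d\<in>set ds. d < B" "k < length ds"
  shows "digN B (encB B ds) k = ds ! k"
proof -
  let ?n = "length ds"
  define a where "a = take k ds"
  define b where "b = drop (Suc k) ds"
  have ds: "ds = a @ [ds ! k] @ b" unfolding a_def b_def using assms(2)
    by (simp add: id_take_nth_drop)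
  have lb: "length b = ?n - 1 - k" unfolding b_def by simp
  have bb: "valB B b < B ^ length b"
    by (rule valB_bound) (use assms(1) in \<open>auto simp: b_def dest: in_set_dropD\<close>)
  have "valB B ds = valB B (a @ [ds ! k]) * B ^ length b + valB B b"
    using ds valB_append by (metis append_assoc)
  then have "encB B ds = B ^ ?n + valB B (a @ [ds ! k]) * B ^ length b + valB B b"
    by (simp add: encB_val)
  also have "B ^ ?n = B ^ (k + 1) * B ^ length b"
    using assms(2) lb by (simp add: power_add[symmetric])
  finally have e: "encB B ds = (B ^ (k + 1) + valB B (a @ [ds ! k])) * B ^ length b + valB B b"
    by (simp add: algebra_simps)
  have "encB B ds div B ^ length b = B ^ (k + 1) + valB B (a @ [ds ! k])"
    unfolding e using bb B2 by simp
  then have "digN B (encB B ds) k = (B ^ (k + 1) + valB B a * B + ds ! k) mod B"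
    unfolding digN_def lenN_encB[OF assms(1)] lb[symmetric] by (simp add: valB_snoc add.assoc)
  also have "\<dots> = ds ! k mod B"
    by (simp add: mod_add_left_eq[symmetric])
  also have "\<dots> = ds ! k" using assms by simp
  finally show ?thesis .
qed

lemma ccN_encB:
  assumes "\<forall>d\<in>set a. d < B" "\<forall>d\<in>set b. d < B"
  shows "ccN B (encB B a) (encB B b) = encB B (a @ b)"
  unfolding ccN_def lenN_encB[OF assms(2)]
  by (simp add: encB_val valB_append power_add algebra_simps)

lemma digits_exist: "r < B ^ n \<Longrightarrow> \<exists>ds. length ds = n \<and> (\<forall>d\<in>set ds. d < B) \<and> valB B ds = r"
proof (induction n arbitrary: r)
  case 0 then show ?case by (auto simp: valB_def)
next
  case (Suc n)
  have "r div B < B ^ n" using Suc.prems B2 by (simp add: div_less_iff_less_mult mult.commute)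
  then obtain ds where ds: "length ds = n" "\<forall>d\<in>set ds. d < B" "valB B ds = r div B"
    using Suc.IH by blast
  show ?case
    by (rule exI[of _ "ds @ [r mod B]"]) (use ds B2 in \<open>auto simp: valB_snoc\<close>)
qed

lemma log_exists: "1 \<le> v \<Longrightarrow> \<exists>n. B ^ n \<le> v \<and> v < B ^ (n + 1)"
proof -
  assume v: "1 \<le> v"
  have ex: "\<exists>n. v < B ^ (n + 1)"
  proof
    have "v < 2 ^ v" by (rule less_exp)
    also have "\<dots> \<le> B ^ v" using B2 by (rule power_mono) simp
    also have "\<dots> \<le> B ^ (v + 1)" using B2 by (intro power_increasing) auto
    finally show "v < B ^ (v + 1)" .
  qed
  define n where "n = (LEAST n. v < B ^ (n + 1))"
  have 1: "v < B ^ (n + 1)" unfolding n_def by (rule LeastI_ex[OF ex])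
  have 2: "B ^ n \<le> v"
  proof (cases n)
    case 0 then show ?thesis using v by simp
  next
    case (Suc m)
    have "\<not> v < B ^ (m + 1)"
      using not_less_Least[of m "\<lambda>n. v < B ^ (n + 1)"] Suc unfolding n_def by simp
    moreover have "B ^ n = B ^ (m + 1)" using Suc by (simp add: Suc_eq_plus1)
    ultimately show ?thesis by linarith
  qed
  show ?thesis using 1 2 by blast
qed

lemma encB_surj:
  assumes "1 \<le> v" "v < 2 * B ^ lenN B v"
  shows "\<exists>ds. (\<forall>d\<in>set ds. d < B) \<and> encB B ds = v"
proof -
  obtain n where n: "B ^ n \<le> v" "v < B ^ (n + 1)" using log_exists[OF assms(1)] by blast
  then have ln: "lenN B v = n" by (rule lenN_eq)
  have "v - B ^ n < B ^ n" using assms(2) n ln by simp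
  then obtain ds where ds: "length ds = n" "\<forall>d\<in>set ds. d < B" "valB B ds = v - B ^ n"
    using digits_exist by blast
  show ?thesis
    by (rule exI[of _ ds]) (use ds n in \<open>simp add: encB_val\<close>)
qed

lemma encB_inj:
  assumes "\<forall>d\<in>set a. d < B" "\<forall>d\<in>set b. d < B" "encB B a = encB B b"
  shows "a = b"
proof -
  have len: "length a = length b" using lenN_encB[OF assms(1)] lenN_encB[OF assms(2)] assms(3) by simp
  show ?thesis
  proof (rule nth_equalityI[OF len])
    fix k assume "k < length a"
    then show "a ! k = b ! k"
      using digN_encB[OF assms(1)] digN_encB[OF assms(2)] assms(3) len by metis
  qed
qed

lemma bitN_iff: "bitN Q d \<noteq> 0 \<longleftrightarrow> d \<in> set_decode Q"
  unfolding bitN_def set_decode_def by (simp add: odd_iff_mod_2_eq_one)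

lemma validN_iff:
  assumes "\<forall>d\<in>set_decode Q. d < B"
  shows "validN B Q v \<noteq> 0 \<longleftrightarrow> (\<exists>ds. set ds \<subseteq> set_decode Q \<and> v = encB B ds)"
proof
  assume "validN B Q v \<noteq> 0"
  then have v: "1 \<le> v" "v < 2 * B ^ lenN B v" "\<forall>k<lenN B v. bitN Q (digN B v k) \<noteq> 0"
    unfolding validN_def by (auto split: if_splits)
  obtain ds where ds: "\<forall>d\<in>set ds. d < B" "encB B ds = v" using encB_surj[OF v(1,2)] by blast
  have "\<forall>k<length ds. ds ! k \<in> set_decode Q"
    using v(3) ds lenN_encB digN_encB bitN_iff by metis
  then have "set ds \<subseteq> set_decode Q" by (auto simp: in_set_conv_nth)
  then show "\<exists>ds. set ds \<subseteq> set_decode Q \<and> v = encB B ds" using ds by auto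
next
  assume "\<exists>ds. set ds \<subseteq> set_decode Q \<and> v = encB B ds"
  then obtain ds where ds: "set ds \<subseteq> set_decode Q" "v = encB B ds" by blast
  have dB: "\<forall>d\<in>set ds. d < B" using ds(1) assms by auto
  have "1 \<le> v" using encB_bounds(1)[OF dB] ds(2) B2
    by (metis le_trans one_le_power order.trans add_leD1 one_add_one)
  moreover have "v < 2 * B ^ lenN B v" using encB_bounds(2)[OF dB] ds(2) lenN_encB[OF dB] by simp
  moreover have "\<forall>k<lenN B v. bitN Q (digN B v k) \<noteq> 0"
    using ds dB lenN_encB digN_encB bitN_iff by (metis nth_mem subsetD)
  ultimately show "validN B Q v \<noteq> 0" unfolding validN_def by simp
qed

lemma winvN_iff:
  assumes "\<forall>d\<in>set es. d < B" "\<forall>d\<in>set ts. d < B"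
  shows "winvN B (encB B es) (encB B ts) \<noteq> 0 \<longleftrightarrow> ts = rev (map flN es)"
proof -
  have "winvN B (encB B es) (encB B ts) \<noteq> 0 \<longleftrightarrow>
      length es = length ts \<and> (\<forall>k<length es. ts ! k = flN (es ! (length es - 1 - k)))"
    unfolding winvN_def lenN_encB[OF assms(1)] lenN_encB[OF assms(2)]
    using digN_encB[OF assms(1)] digN_encB[OF assms(2)] by auto
  also have "\<dots> \<longleftrightarrow> ts = rev (map flN es)"
  proof
    assume h: "length es = length ts \<and> (\<forall>k<length es. ts ! k = flN (es ! (length es - 1 - k)))"
    show "ts = rev (map flN es)"
      by (rule nth_equalityI) (use h in \<open>auto simp: rev_nth Suc_eq_plus1_left\<close>)
  next
    assume "ts = rev (map flN es)"
    then show "length es = length ts \<and> (\<forall>k<length es. ts ! k = flN (es ! (length es - 1 - k)))"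
      by (auto simp: rev_nth Suc_eq_plus1_left)
  qed
  finally show ?thesis .
qed

end


declare One_nat_def [simp del]

lemma bitN_iff': "bitN Q d \<noteq> 0 \<longleftrightarrow> d \<in> set_decode Q"
  unfolding bitN_def set_decode_def by (simp add: odd_iff_mod_2_eq_one)

lemma peN_eq: "peN a b = prod_encode (a, b)"
  by (simp add: peN_def prod_encode_def triangle_def Suc_eq_plus1)

lemma dsum:
  fixes f :: "nat \<Rightarrow> nat \<Rightarrow> nat"
  assumes "a0 < n" "b0 < n"
  shows "(\<Sum>a<n. \<Sum>b<n. if a = a0 \<and> b = b0 then f a b else 0) = f a0 b0"
proof -
  have "(\<Sum>b<n. if a = a0 \<and> b = b0 then f a b else 0) = (if a = a0 then f a b0 else 0)" for a
    using assms(2) by (cases "a = a0") (simp_all add: sum.delta)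
  then have "(\<Sum>a<n. \<Sum>b<n. if a = a0 \<and> b = b0 then f a b else 0) = (\<Sum>a<n. if a = a0 then f a b0 else 0)"
    by simp
  also have "\<dots> = f a0 b0" using assms(1) by (simp add: sum.delta)
  finally show ?thesis .
qed

lemma pd_facts:
  obtains a0 b0 where "prod_decode c = (a0, b0)" "a0 < c + 1" "b0 < c + 1"
    "\<And>a b. peN a b = c \<longleftrightarrow> a = a0 \<and> b = b0"
proof -
  obtain a0 b0 where pd: "prod_decode c = (a0, b0)" by (cases "prod_decode c") auto
  have c: "c = prod_encode (a0, b0)" using prod_decode_inverse[of c] pd by simp
  have "a0 \<le> c" "b0 \<le> c" using c le_prod_encode_1 le_prod_encode_2 by auto
  moreover have "peN a b = c \<longleftrightarrow> a = a0 \<and> b = b0" for a b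
    unfolding peN_eq c by simp
  ultimately show ?thesis using that pd by simp
qed

lemma fstN_eq: "fstN c = fst (prod_decode c)"
proof -
  obtain a0 b0 where p: "prod_decode c = (a0, b0)" "a0 < c + 1" "b0 < c + 1"
    "\<And>a b. peN a b = c \<longleftrightarrow> a = a0 \<and> b = b0" using pd_facts[of c] by blast
  have "fstN c = (\<Sum>a<c + 1. \<Sum>b<c + 1. if a = a0 \<and> b = b0 then a else 0)"
    unfolding fstN_def p(4) ..
  also have "\<dots> = a0" using dsum[OF p(2,3), of "\<lambda>a b. a"] by simp
  finally show ?thesis using p(1) by simp
qed

lemma sndN_eq: "sndN c = snd (prod_decode c)"
proof -
  obtain a0 b0 where p: "prod_decode c = (a0, b0)" "a0 < c + 1" "b0 < c + 1"
    "\<And>a b. peN a b = c \<longleftrightarrow> a = a0 \<and> b = b0" using pd_facts[of c] by blast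
  have "sndN c = (\<Sum>a<c + 1. \<Sum>b<c + 1. if a = a0 \<and> b = b0 then b else 0)"
    unfolding sndN_def p(4) ..
  also have "\<dots> = b0" using dsum[OF p(2,3), of "\<lambda>a b. b"] by simp
  finally show ?thesis using p(1) by simp
qed

lemma length_le_encode: "length ds \<le> list_encode ds"
proof (induction ds)
  case Nil then show ?case by simp
next
  case (Cons x xs)
  then show ?case using le_prod_encode_2[of "list_encode xs" x] by simp
qed

lemma prod_decode_0: "prod_decode 0 = (0, 0)"
  by (simp add: prod_decode_def prod_decode_aux.simps)

lemma curN_enc: "curN (list_encode ds) k = list_encode (drop k ds)"
proof (induction k)
  case 0 then show ?case by (simp add: curN_def)
next
  case (Suc k)
  have s: "curN (list_encode ds) (Suc k) = sndN (curN (list_encode ds) k - 1)"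
    by (simp add: curN_def)
  have d: "drop (Suc k) ds = tl (drop k ds)" by (simp add: drop_Suc tl_drop)
  show ?case
  proof (cases "drop k ds")
    case Nil
    then show ?thesis using s Suc d by (simp add: sndN_eq prod_decode_0)
  next
    case (Cons a r)
    then show ?thesis using s Suc d by (simp add: sndN_eq)
  qed
qed

lemma accN_enc: "accN B (list_encode ds) k = encB B (take k ds)"
proof (induction k)
  case 0 then show ?case by (simp add: accN_def encB_def)
next
  case (Suc k)
  have s: "accN B (list_encode ds) (Suc k) = (if curN (list_encode ds) k = 0 then accN B (list_encode ds) k
      else accN B (list_encode ds) k * B + fstN (curN (list_encode ds) k - 1))"
    by (simp add: accN_def)
  show ?case
  proof (cases "k < length ds")
    case True
    then have dk: "drop k ds = ds ! k # drop (Suc k) ds" by (simp add: Cons_nth_drop_Suc)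
    have "take (Suc k) ds = take k ds @ [ds ! k]" using True by (simp add: take_Suc_conv_app_nth)
    then show ?thesis using s Suc dk curN_enc[of ds k] by (simp add: fstN_eq encB_snoc)
  next
    case False
    then show ?thesis using s Suc curN_enc[of ds k] by simp
  qed
qed

locale wp =
  fixes B K :: nat and L :: "nat set" and TW :: "nat list \<Rightarrow> bool"
  assumes B2: "2 \<le> B" and Lfin: "finite L" and LB: "\<forall>d\<in>L. d < B"
    and Lfl: "\<forall>d\<in>L. flN d \<in> L"
    and char_fw: "\<And>ds. set ds \<subseteq> L \<Longrightarrow> K \<le> length ds \<Longrightarrow> TW ds \<Longrightarrow>
       \<exists>xs ys zs es. ds = xs @ ys @ zs \<and> set es \<subseteq> L \<and> length es < length ys \<and>
         length es + length ys < length ds \<and> TW (ys @ rev (map flN es)) \<and> TW (xs @ es @ zs)"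
    and char_bw: "\<And>xs ys zs es. set (xs @ ys @ zs) \<subseteq> L \<Longrightarrow> set es \<subseteq> L \<Longrightarrow>
       TW (ys @ rev (map flN es)) \<Longrightarrow> TW (xs @ es @ zs) \<Longrightarrow> TW (xs @ ys @ zs)"
begin

definition "Q = set_encode L"
definition "T0 = encB B ` {ds. set ds \<subseteq> L \<and> length ds < K \<and> TW ds}"
definition "Q0 = set_encode T0"
definition "Pv v = (\<exists>ds. set ds \<subseteq> L \<and> v = encB B ds \<and> TW ds)"

lemma setQ: "set_decode Q = L"
  unfolding Q_def using Lfin by simp

lemma finT0: "finite T0"
proof -
  have "{ds. set ds \<subseteq> L \<and> length ds < K \<and> TW ds} \<subseteq> {ds. set ds \<subseteq> L \<and> length ds \<le> K}" by auto
  then have "finite {ds. set ds \<subseteq> L \<and> length ds < K \<and> TW ds}"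
    using finite_lists_length_le[OF Lfin] finite_subset by blast
  then show ?thesis unfolding T0_def by simp
qed

lemma setQ0: "set_decode Q0 = T0"
  unfolding Q0_def using finT0 by simp

lemma dB: "set ds \<subseteq> L \<Longrightarrow> \<forall>d\<in>set ds. d < B"
  using LB by auto

lemma inj: "set a \<subseteq> L \<Longrightarrow> set b \<subseteq> L \<Longrightarrow> encB B a = encB B b \<Longrightarrow> a = b"
  using encB_inj[OF B2] dB by blast

lemma Pv_enc: "set ds \<subseteq> L \<Longrightarrow> Pv (encB B ds) \<longleftrightarrow> TW ds"
  unfolding Pv_def using inj by blast

lemma validN_L: "validN B Q v \<noteq> 0 \<longleftrightarrow> (\<exists>ds. set ds \<subseteq> L \<and> v = encB B ds)"
  using validN_iff[OF B2, of Q v] LB setQ by simp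

lemma FN01: "FN B K Q Q0 v h = 0 \<or> FN B K Q Q0 v h = 1"
  unfolding FN_def by simp

abbreviation "TT \<equiv> TN B K Q Q0"
abbreviation "HH \<equiv> HN B K Q Q0"

lemma HN_Suc: "HH (Suc v) = HH v + TT v * 2 ^ v"
  unfolding HN_def TN_def by simp

lemma HN_eq: "HH v = set_encode {u. u < v \<and> TT u \<noteq> 0}"
proof (induction v)
  case 0 then show ?case by (simp add: HN_def)
next
  case (Suc v)
  show ?case
  proof (cases "TT v = 0")
    case True
    then have "{u. u < Suc v \<and> TT u \<noteq> 0} = {u. u < v \<and> TT u \<noteq> 0}" using less_Suc_eq by auto
    then show ?thesis using Suc True HN_Suc by simp
  next
    case False
    then have T1: "TT v = 1" using FN01[of v "HH v"] unfolding TN_def by auto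
    have "{u. u < Suc v \<and> TT u \<noteq> 0} = insert v {u. u < v \<and> TT u \<noteq> 0}" using False less_Suc_eq by auto
    moreover have "finite {u. u < v \<and> TT u \<noteq> 0}" by simp
    ultimately have "set_encode {u. u < Suc v \<and> TT u \<noteq> 0} = 2 ^ v + set_encode {u. u < v \<and> TT u \<noteq> 0}"
      by simp
    then show ?thesis using Suc T1 HN_Suc by simp
  qed
qed

lemma bit_HN: "u < v \<Longrightarrow> bitN (HH v) u \<noteq> 0 \<longleftrightarrow> TT u \<noteq> 0"
  unfolding bitN_iff' HN_eq by simp

lemma enc_lt: "set ds \<subseteq> L \<Longrightarrow> length ds \<le> n \<Longrightarrow> encB B ds < B ^ (n + 1)"
proof -
  assume a: "set ds \<subseteq> L" "length ds \<le> n"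
  have "encB B ds < B ^ (length ds + 1)" using encB_bounds(3)[OF B2 dB[OF a(1)]] .
  also have "\<dots> \<le> B ^ (n + 1)" using B2 a(2) by (intro power_increasing) auto
  finally show ?thesis .
qed

lemma enc_lt_v: "set ds \<subseteq> L \<Longrightarrow> set ws \<subseteq> L \<Longrightarrow> length ws < length ds \<Longrightarrow> encB B ws < encB B ds"
proof -
  assume a: "set ds \<subseteq> L" "set ws \<subseteq> L" "length ws < length ds"
  have "encB B ws < B ^ (length ws + 1)" by (rule enc_lt[OF a(2)]) simp
  also have "\<dots> \<le> B ^ length ds" using B2 a(3) by (intro power_increasing) auto
  also have "\<dots> \<le> encB B ds" using encB_bounds(1)[OF B2 dB[OF a(1)]] .
  finally show ?thesis .
qed

lemma TN_iff: "TT v \<noteq> 0 \<longleftrightarrow> Pv v"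
proof (induction v rule: less_induct)
  case (less v)
  let ?h = "HH v"
  have IH: "c < v \<Longrightarrow> bitN ?h c \<noteq> 0 \<longleftrightarrow> Pv c" for c
    using bit_HN less by blast
  show ?case
  proof (cases "validN B Q v \<noteq> 0")
    case False
    then have "\<not> Pv v" using validN_L unfolding Pv_def by blast
    moreover have "TT v = 0" using False unfolding TN_def FN_def by simp
    ultimately show ?thesis by simp
  next
    case True
    then obtain ds where ds: "set ds \<subseteq> L" "v = encB B ds" using validN_L by blast
    have dsB: "\<forall>d\<in>set ds. d < B" using dB[OF ds(1)] .
    have lv: "lenN B v = length ds" using lenN_encB[OF B2 dsB] ds by simp
    have Pv: "Pv v \<longleftrightarrow> TW ds" using Pv_enc[OF ds(1)] ds by simp
    have short: "lenN B v < K \<and> bitN Q0 v \<noteq> 0 \<longleftrightarrow> length ds < K \<and> TW ds"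
    proof -
      have "bitN Q0 v \<noteq> 0 \<longleftrightarrow> v \<in> T0" using bitN_iff' setQ0 by simp
      also have "\<dots> \<longleftrightarrow> length ds < K \<and> TW ds"
        unfolding T0_def using ds inj by auto
      finally show ?thesis using lv by auto
    qed
    define EXc where "EXc = (\<exists>x<bdN B v. \<exists>y<bdN B v. \<exists>z<bdN B v. \<exists>e<bdN B v. \<exists>t<bdN B v.
        validN B Q x \<noteq> 0 \<and> validN B Q y \<noteq> 0 \<and> validN B Q z \<noteq> 0 \<and> validN B Q e \<noteq> 0 \<and>
        validN B Q t \<noteq> 0 \<and> v = ccN B (ccN B x y) z \<and> lenN B e < lenN B y \<and>
        lenN B e + lenN B y < lenN B v \<and> winvN B e t \<noteq> 0 \<and>
        bitN ?h (ccN B y t) \<noteq> 0 \<and> bitN ?h (ccN B (ccN B x e) z) \<noteq> 0)"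
    have TTv: "TT v \<noteq> 0 \<longleftrightarrow> (lenN B v < K \<and> bitN Q0 v \<noteq> 0) \<or> EXc"
      unfolding TN_def FN_def EXc_def using True by (simp only: if01_simps simp_thms)
    have EX1: "EXc \<Longrightarrow> TW ds"
    proof -
      assume EXc
      then obtain x y z e t where
        v: "validN B Q x \<noteq> 0" "validN B Q y \<noteq> 0" "validN B Q z \<noteq> 0" "validN B Q e \<noteq> 0"
           "validN B Q t \<noteq> 0" and eq: "v = ccN B (ccN B x y) z" and l1: "lenN B e < lenN B y"
           and l2: "lenN B e + lenN B y < lenN B v" and w: "winvN B e t \<noteq> 0"
           and b1: "bitN ?h (ccN B y t) \<noteq> 0" and b2: "bitN ?h (ccN B (ccN B x e) z) \<noteq> 0"
        unfolding EXc_def by blast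
      obtain xs where xs: "set xs \<subseteq> L" "x = encB B xs" using v(1) validN_L by blast
      obtain ys where ys: "set ys \<subseteq> L" "y = encB B ys" using v(2) validN_L by blast
      obtain zs where zs: "set zs \<subseteq> L" "z = encB B zs" using v(3) validN_L by blast
      obtain es where es: "set es \<subseteq> L" "e = encB B es" using v(4) validN_L by blast
      obtain ts where ts: "set ts \<subseteq> L" "t = encB B ts" using v(5) validN_L by blast
      note B = dB[OF xs(1)] dB[OF ys(1)] dB[OF zs(1)] dB[OF es(1)] dB[OF ts(1)]
      have "v = encB B (xs @ ys @ zs)"
        using eq xs ys zs ccN_encB[OF B2] B by (simp add: ball_Un)
      then have dsd: "ds = xs @ ys @ zs" using inj[OF ds(1)] ds(2) xs ys zs by simp
      have le: "length es < length ys" "length es + length ys < length ds"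
        using l1 l2 lv lenN_encB[OF B2] B es ys by auto
      have tse: "ts = rev (map flN es)" using w winvN_iff[OF B2] B es ts by simp
      have c1: "ccN B y t = encB B (ys @ ts)" using ccN_encB[OF B2] B ys ts by simp
      have c2: "ccN B (ccN B x e) z = encB B (xs @ es @ zs)"
        using ccN_encB[OF B2] B xs es zs by (simp add: ball_Un)
      have s1: "set (ys @ ts) \<subseteq> L" using ys ts by simp
      have s2: "set (xs @ es @ zs) \<subseteq> L" using xs es zs by simp
      have lt1: "encB B (ys @ ts) < v"
        using enc_lt_v[OF ds(1) s1] ds(2) le tse by simp
      have lt2: "encB B (xs @ es @ zs) < v"
        using enc_lt_v[OF ds(1) s2] ds(2) le dsd by simp
      have "TW (ys @ ts)" using IH[OF lt1] b1 c1 Pv_enc[OF s1] by simp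
      moreover have "TW (xs @ es @ zs)" using IH[OF lt2] b2 c2 Pv_enc[OF s2] by simp
      ultimately show "TW ds" using char_bw[of xs ys zs es] ds(1) dsd es(1) tse by simp
    qed
    have EX2: "TW ds \<Longrightarrow> K \<le> length ds \<Longrightarrow> EXc"
    proof -
      assume tw: "TW ds" and kl: "K \<le> length ds"
      obtain xs ys zs es where d: "ds = xs @ ys @ zs" "set es \<subseteq> L" "length es < length ys"
        "length es + length ys < length ds" "TW (ys @ rev (map flN es))" "TW (xs @ es @ zs)"
        using char_fw[OF ds(1) kl tw] by blast
      define ts where "ts = rev (map flN es)"
      have xs: "set xs \<subseteq> L" and ys: "set ys \<subseteq> L" and zs: "set zs \<subseteq> L" using ds(1) d(1) by auto
      have ts: "set ts \<subseteq> L" unfolding ts_def using d(2) Lfl by auto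
      note es = d(2)
      note B = dB[OF xs] dB[OF ys] dB[OF zs] dB[OF es] dB[OF ts]
      have bd: "set ws \<subseteq> L \<Longrightarrow> length ws \<le> length ds \<Longrightarrow> encB B ws < bdN B v" for ws
        unfolding bdN_def lv using enc_lt by simp
      have ld: "length xs \<le> length ds" "length ys \<le> length ds" "length zs \<le> length ds"
        "length es \<le> length ds" "length ts \<le> length ds"
        using d(1,4) unfolding ts_def by auto
      have s1: "set (ys @ ts) \<subseteq> L" using ys ts by simp
      have s2: "set (xs @ es @ zs) \<subseteq> L" using xs es zs by simp
      have lt1: "encB B (ys @ ts) < v"
        using enc_lt_v[OF ds(1) s1] ds(2) d(4) unfolding ts_def by simp
      have lt2: "encB B (xs @ es @ zs) < v"
        using enc_lt_v[OF ds(1) s2] ds(2) d(1,3) by simp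
      show EXc unfolding EXc_def
      proof (intro exI conjI)
        show "encB B xs < bdN B v" "encB B ys < bdN B v" "encB B zs < bdN B v"
          "encB B es < bdN B v" "encB B ts < bdN B v"
          using bd xs ys zs es ts ld by auto
        show "validN B Q (encB B xs) \<noteq> 0" "validN B Q (encB B ys) \<noteq> 0" "validN B Q (encB B zs) \<noteq> 0"
          "validN B Q (encB B es) \<noteq> 0" "validN B Q (encB B ts) \<noteq> 0"
          using validN_L xs ys zs es ts by blast+
        show "v = ccN B (ccN B (encB B xs) (encB B ys)) (encB B zs)"
          using ccN_encB[OF B2] B ds(2) d(1) by (simp add: ball_Un)
        show "lenN B (encB B es) < lenN B (encB B ys)"
          using lenN_encB[OF B2] B d(3) by simp
        show "lenN B (encB B es) + lenN B (encB B ys) < lenN B v"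
          using lenN_encB[OF B2] B d(4) lv by simp
        show "winvN B (encB B es) (encB B ts) \<noteq> 0"
          using winvN_iff[OF B2] B ts_def by simp
        show "bitN ?h (ccN B (encB B ys) (encB B ts)) \<noteq> 0"
          using IH[OF lt1] ccN_encB[OF B2] B Pv_enc[OF s1] d(5) ts_def by simp
        show "bitN ?h (ccN B (ccN B (encB B xs) (encB B es)) (encB B zs)) \<noteq> 0"
          using IH[OF lt2] ccN_encB[OF B2] B Pv_enc[OF s2] d(6) by (simp add: ball_Un)
      qed
    qed
    show ?thesis using TTv Pv short EX1 EX2 by (meson not_le)
  qed
qed

lemma decN_iff: "decN B K Q Q0 c \<noteq> 0 \<longleftrightarrow> set (list_decode c) \<subseteq> L \<and> TW (list_decode c)"
proof -
  define ds where "ds = list_decode c"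
  have c: "c = list_encode ds" unfolding ds_def by simp
  have cur: "curN c k = list_encode (drop k ds)" for k
    unfolding c by (rule curN_enc)
  have acc: "accN B c k = encB B (take k ds)" for k
    unfolding c by (rule accN_enc)
  have vl: "vlN Q c \<noteq> 0 \<longleftrightarrow> set ds \<subseteq> L"
  proof -
    have lc: "length ds < c + 1" using length_le_encode[of ds] c by simp
    have "vlN Q c \<noteq> 0 \<longleftrightarrow> (\<forall>k<c + 1. curN c k = 0 \<or> bitN Q (fstN (curN c k - 1)) \<noteq> 0)"
      unfolding vlN_def by simp
    also have "\<dots> \<longleftrightarrow> (\<forall>k<length ds. ds ! k \<in> L)"
    proof
      assume h: "\<forall>k<c + 1. curN c k = 0 \<or> bitN Q (fstN (curN c k - 1)) \<noteq> 0"
      show "\<forall>k<length ds. ds ! k \<in> L"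
      proof (intro allI impI)
        fix k assume k: "k < length ds"
        then have dk: "drop k ds = ds ! k # drop (Suc k) ds" by (simp add: Cons_nth_drop_Suc)
        have ck: "curN c k = Suc (prod_encode (ds ! k, list_encode (drop (Suc k) ds)))"
          using cur dk by simp
        then have f: "fstN (curN c k - 1) = ds ! k" by (simp add: fstN_eq)
        have "k < c + 1" using k lc by simp
        then have "bitN Q (fstN (curN c k - 1)) \<noteq> 0" using h ck by auto
        then show "ds ! k \<in> L" using f bitN_iff' setQ by simp
      qed
    next
      assume h: "\<forall>k<length ds. ds ! k \<in> L"
      show "\<forall>k<c + 1. curN c k = 0 \<or> bitN Q (fstN (curN c k - 1)) \<noteq> 0"
      proof (intro allI impI)
        fix k assume "k < c + 1"
        show "curN c k = 0 \<or> bitN Q (fstN (curN c k - 1)) \<noteq> 0"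
        proof (cases "k < length ds")
          case True
          then have dk: "drop k ds = ds ! k # drop (Suc k) ds" by (simp add: Cons_nth_drop_Suc)
          have ck: "curN c k = Suc (prod_encode (ds ! k, list_encode (drop (Suc k) ds)))"
            using cur dk by simp
          then have f: "fstN (curN c k - 1) = ds ! k" by (simp add: fstN_eq)
          have "ds ! k \<in> L" using h True by simp
          then show ?thesis using f bitN_iff' setQ by simp
        next
          case False
          then show ?thesis using cur by simp
        qed
      qed
    qed
    also have "\<dots> \<longleftrightarrow> set ds \<subseteq> L" by (auto simp: in_set_conv_nth dest: nth_mem)
    finally show ?thesis .
  qed
  have "decN B K Q Q0 c \<noteq> 0 \<longleftrightarrow> vlN Q c \<noteq> 0 \<and> TT (encB B ds) \<noteq> 0"
    unfolding decN_def acc[of c] using length_le_encode[of ds] c by simp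
  also have "\<dots> \<longleftrightarrow> set ds \<subseteq> L \<and> TW ds"
    using vl TN_iff Pv_enc by blast
  finally show ?thesis unfolding ds_def .
qed

end


declare One_nat_def [simp del]

lemma flip_flip [simp]: "flip (flip x) = x"
  by (simp add: flip_def)

lemma winv_Nil [simp]: "winv [] = []" by (simp add: winv_def)
lemma winv_Cons [simp]: "winv (x # w) = winv w @ [flip x]" by (simp add: winv_def)
lemma winv_append [simp]: "winv (a @ b) = winv b @ winv a" by (simp add: winv_def)
lemma winv_winv [simp]: "winv (winv w) = w" by (simp add: winv_def rev_map comp_def)
lemma length_winv [simp]: "length (winv w) = length w" by (simp add: winv_def)

lemma letters_flip: "x \<in> letters S \<Longrightarrow> flip x \<in> letters S"
  by (auto simp: letters_def flip_def)

lemma winv_lists: "w \<in> lists (letters S) \<Longrightarrow> winv w \<in> lists (letters S)"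
  unfolding winv_def in_lists_conv_set by (simp add: letters_flip)

lemma free_eq_map:
  assumes "\<And>a b. red1 a b \<Longrightarrow> red1 (g a) (g b)" "free_eq a b"
  shows "free_eq (g a) (g b)"
  using assms(2) unfolding free_eq_def
proof (induction rule: equivclp_induct)
  case base then show ?case by simp
next
  case (step y z)
  then show ?case using assms(1) by (meson equivclp_into_equivclp)
qed

lemma red1_ctx: "red1 a b \<Longrightarrow> red1 (u @ a @ v) (u @ b @ v)"
proof (induction rule: red1.induct)
  case (1 xs x ys)
  have "red1 ((u @ xs) @ [x, flip x] @ (ys @ v)) ((u @ xs) @ (ys @ v))" by (rule red1.intros)
  then show ?case by simp
qed

lemma free_eq_ctx: "free_eq a b \<Longrightarrow> free_eq (u @ a @ v) (u @ b @ v)"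
  by (rule free_eq_map[where g = "\<lambda>w. u @ w @ v"]) (auto intro: red1_ctx)

lemma red1_winv: "red1 a b \<Longrightarrow> red1 (winv a) (winv b)"
proof (induction rule: red1.induct)
  case (1 xs x ys)
  have "red1 (winv ys @ [x, flip x] @ winv xs) (winv ys @ winv xs)" by (rule red1.intros)
  then show ?case by simp
qed

lemma free_eq_winv: "free_eq a b \<Longrightarrow> free_eq (winv a) (winv b)"
  by (rule free_eq_map[where g = winv]) (auto intro: red1_winv)

lemma free_eq_refl [simp]: "free_eq a a" by (simp add: free_eq_def)
lemma free_eq_sym: "free_eq a b \<Longrightarrow> free_eq b a" unfolding free_eq_def by (rule equivclp_sym)
lemma free_eq_trans [trans]: "free_eq a b \<Longrightarrow> free_eq b c \<Longrightarrow> free_eq a c"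
  unfolding free_eq_def by (rule equivclp_trans)

lemma free_eq_app: "free_eq a a' \<Longrightarrow> free_eq b b' \<Longrightarrow> free_eq (a @ b) (a' @ b')"
  using free_eq_ctx[of a a' "[]" b] free_eq_ctx[of b b' a' "[]"] free_eq_trans by auto

lemma winv_cancel: "free_eq (winv v @ v) []"
proof (induction v)
  case Nil then show ?case by simp
next
  case (Cons x v)
  have "red1 (winv v @ [flip x, flip (flip x)] @ v) (winv v @ v)" by (rule red1.intros)
  then have "free_eq (winv (x # v) @ x # v) (winv v @ v)" unfolding free_eq_def by auto
  then show ?case using Cons free_eq_trans by blast
qed

lemma winv_cancel': "free_eq (v @ winv v) []"
  using winv_cancel[of "winv v"] by simp

lemma cancel_mid: "free_eq (a @ winv v @ v @ b) (a @ b)"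
  using free_eq_ctx[OF winv_cancel, of a v b] by simp

lemma cancel_mid': "free_eq (a @ v @ winv v @ b) (a @ b)"
  using free_eq_ctx[OF winv_cancel', of a v b] by simp

section \<open>Products of conjugates\<close>

lemma pc_free: "is_prod_conj S R w m \<Longrightarrow> free_eq w w' \<Longrightarrow> is_prod_conj S R w' m"
  unfolding is_prod_conj_def using free_eq_sym free_eq_trans by blast

lemma pc_zero: "is_prod_conj S R [] 0"
  unfolding is_prod_conj_def by auto

lemma pc_append: "is_prod_conj S R a m \<Longrightarrow> is_prod_conj S R b m' \<Longrightarrow> is_prod_conj S R (a @ b) (m + m')"
proof -
  assume "is_prod_conj S R a m" "is_prod_conj S R b m'"
  then obtain cs ds where cs: "length cs = m" "\<forall>(u, r, e) \<in> set cs. u \<in> lists (letters S) \<and> r \<in> R"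
      "free_eq a (concat (map conjr cs))"
    and ds: "length ds = m'" "\<forall>(u, r, e) \<in> set ds. u \<in> lists (letters S) \<and> r \<in> R"
      "free_eq b (concat (map conjr ds))"
    unfolding is_prod_conj_def by blast
  show ?thesis unfolding is_prod_conj_def
    by (rule exI[of _ "cs @ ds"]) (use cs ds free_eq_app in auto)
qed

lemma conj_concat:
  "free_eq (u @ concat (map conjr cs) @ winv u) (concat (map conjr (map (\<lambda>(v, r, e). (u @ v, r, e)) cs)))"
proof (induction cs)
  case Nil then show ?case using winv_cancel' by simp
next
  case (Cons c cs)
  obtain v r e where c: "c = (v, r, e)" by (cases c) auto
  let ?r = "if e then r else winv r"
  have "free_eq (u @ conjr c @ concat (map conjr cs) @ winv u)
      (u @ conjr c @ winv u @ u @ concat (map conjr cs) @ winv u)"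
    using free_eq_sym[OF cancel_mid[of "u @ conjr c" u "concat (map conjr cs) @ winv u"]] by simp
  also have "free_eq \<dots> ((u @ conjr c @ winv u) @ concat (map conjr (map (\<lambda>(v, r, e). (u @ v, r, e)) cs)))"
    using free_eq_ctx[OF Cons, of "u @ conjr c @ winv u" "[]"] by simp
  finally have X: "free_eq (u @ conjr c @ concat (map conjr cs) @ winv u)
    ((u @ conjr c @ winv u) @ concat (map conjr (map (\<lambda>(v, r, e). (u @ v, r, e)) cs)))" .
  have e1: "u @ concat (map conjr (c # cs)) @ winv u = u @ conjr c @ concat (map conjr cs) @ winv u"
    by simp
  have e2: "concat (map conjr (map (\<lambda>(v, r, e). (u @ v, r, e)) (c # cs))) =
    (u @ conjr c @ winv u) @ concat (map conjr (map (\<lambda>(v, r, e). (u @ v, r, e)) cs))"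
    using c by (simp add: conjr_def)
  show ?case unfolding e1 e2 by (rule X)
qed

lemma pc_conj:
  assumes "u \<in> lists (letters S)" "is_prod_conj S R w m"
  shows "is_prod_conj S R (u @ w @ winv u) m"
proof -
  obtain cs where cs: "length cs = m" "\<forall>(u, r, e) \<in> set cs. u \<in> lists (letters S) \<and> r \<in> R"
      "free_eq w (concat (map conjr cs))"
    using assms(2) unfolding is_prod_conj_def by blast
  have "free_eq (u @ w @ winv u) (u @ concat (map conjr cs) @ winv u)"
    by (rule free_eq_ctx[OF cs(3)])
  then have "free_eq (u @ w @ winv u) (concat (map conjr (map (\<lambda>(v, r, e). (u @ v, r, e)) cs)))"
    using conj_concat free_eq_trans by blast
  then show ?thesis unfolding is_prod_conj_def
  proof (intro exI[of _ "map (\<lambda>(v, r, e). (u @ v, r, e)) cs"] conjI)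
    show "\<forall>(v, r, e) \<in> set (map (\<lambda>(v, r, e). (u @ v, r, e)) cs). v \<in> lists (letters S) \<and> r \<in> R"
    proof (intro ballI)
      fix c assume "c \<in> set (map (\<lambda>(v, r, e). (u @ v, r, e)) cs)"
      then obtain v r e where c: "(v, r, e) \<in> set cs" "c = (u @ v, r, e)" by auto
      then have "v \<in> lists (letters S) \<and> r \<in> R" using cs(2) by blast
      then show "case c of (v, r, e) \<Rightarrow> v \<in> lists (letters S) \<and> r \<in> R"
        using c assms(1) by auto
    qed
  qed (use cs in auto)
qed

lemma winv_conjr: "winv (conjr (u, r, e)) = conjr (u, r, \<not> e)"
  by (simp add: conjr_def)

lemma winv_concat_conjr:
  "winv (concat (map conjr cs)) = concat (map conjr (rev (map (\<lambda>(u, r, e). (u, r, \<not> e)) cs)))"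
proof (induction cs)
  case Nil then show ?case by simp
next
  case (Cons c cs)
  obtain u r e where "c = (u, r, e)" by (cases c) auto
  then show ?case using Cons by (simp add: winv_conjr[of u r e, symmetric])
qed

lemma pc_winv: "is_prod_conj S R w m \<Longrightarrow> is_prod_conj S R (winv w) m"
proof -
  assume "is_prod_conj S R w m"
  then obtain cs where cs: "length cs = m" "\<forall>(u, r, e) \<in> set cs. u \<in> lists (letters S) \<and> r \<in> R"
      "free_eq w (concat (map conjr cs))"
    unfolding is_prod_conj_def by blast
  have "free_eq (winv w) (concat (map conjr (rev (map (\<lambda>(u, r, e). (u, r, \<not> e)) cs))))"
    using free_eq_winv[OF cs(3)] by (simp only: winv_concat_conjr)
  then show ?thesis unfolding is_prod_conj_def
  proof (intro exI[of _ "rev (map (\<lambda>(u, r, e). (u, r, \<not> e)) cs)"] conjI)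
    show "\<forall>(v, r, e) \<in> set (rev (map (\<lambda>(u, r, e). (u, r, \<not> e)) cs)). v \<in> lists (letters S) \<and> r \<in> R"
    proof (intro ballI)
      fix c assume "c \<in> set (rev (map (\<lambda>(u, r, e). (u, r, \<not> e)) cs))"
      then obtain v r e where c: "(v, r, e) \<in> set cs" "c = (v, r, \<not> e)" by auto
      then have "v \<in> lists (letters S) \<and> r \<in> R" using cs(2) by blast
      then show "case c of (v, r, e) \<Rightarrow> v \<in> lists (letters S) \<and> r \<in> R"
        using c by auto
    qed
  qed (use cs in auto)
qed

lemma K1:
  assumes "x \<in> lists (letters S)" "is_prod_conj S R (y @ winv s) m1" "is_prod_conj S R (x @ s @ z) m2"
  shows "is_prod_conj S R (x @ y @ z) (m1 + m2)"
proof -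
  have "is_prod_conj S R ((x @ (y @ winv s) @ winv x) @ (x @ s @ z)) (m1 + m2)"
    by (rule pc_append[OF pc_conj[OF assms(1,2)] assms(3)])
  moreover have "free_eq ((x @ (y @ winv s) @ winv x) @ (x @ s @ z)) (x @ y @ winv s @ s @ z)"
    using cancel_mid[of "x @ y @ winv s" x "s @ z"] by simp
  moreover have "free_eq (x @ y @ winv s @ s @ z) (x @ y @ z)"
    using cancel_mid[of "x @ y" s z] by simp
  ultimately show ?thesis using pc_free free_eq_trans by blast
qed

lemma K2:
  assumes "x \<in> lists (letters S)" "is_prod_conj S R (y @ winv s) m1" "is_prod_conj S R (x @ y @ z) m2"
  shows "is_prod_conj S R (x @ s @ z) (m1 + m2)"
proof -
  have "is_prod_conj S R (s @ winv y) m1" using pc_winv[OF assms(2)] by simp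
  then have "is_prod_conj S R ((x @ (s @ winv y) @ winv x) @ (x @ y @ z)) (m1 + m2)"
    by (rule pc_append[OF pc_conj[OF assms(1)] assms(3)])
  moreover have "free_eq ((x @ (s @ winv y) @ winv x) @ (x @ y @ z)) (x @ s @ winv y @ y @ z)"
    using cancel_mid[of "x @ s @ winv y" x "y @ z"] by simp
  moreover have "free_eq (x @ s @ winv y @ y @ z) (x @ s @ z)"
    using cancel_mid[of "x @ s" y z] by simp
  ultimately show ?thesis using pc_free free_eq_trans by blast
qed


declare One_nat_def [simp del]

lemma subw_split:
  assumes "1 \<le> p" "p \<le> q" "q \<le> length w"
  shows "w = take (p - 1) w @ subw w p q @ drop q w" "length (subw w p q) = Suc q - p"
proof -
  have "take (p - 1) w @ subw w p q = take (p - 1 + (Suc q - p)) w"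
    unfolding subw_def by (simp add: take_add)
  also have "p - 1 + (Suc q - p) = q" using assms by simp
  finally have "take (p - 1) w @ subw w p q = take q w" .
  then show "w = take (p - 1) w @ subw w p q @ drop q w"
    by (metis append.assoc append_take_drop_id)
  show "length (subw w p q) = Suc q - p" unfolding subw_def using assms by simp
qed

lemma area_pc: "in_ncl S R w \<Longrightarrow> is_prod_conj S R w (area S R w)"
  unfolding in_ncl_def area_def by (auto intro: LeastI_ex)

lemma area_le: "is_prod_conj S R w m \<Longrightarrow> area S R w \<le> m"
  unfolding area_def by (rule Least_le)

lemma G_eq_Nil: "G_eq S R u [] = in_ncl S R u"
  by (simp add: G_eq_def)

lemma decomp:
  assumes ch: "chordal S R k" and w: "in_ncl S R w" and len: "max k 3 \<le> length w"
  shows "\<exists>x y z s. w = x @ y @ z \<and> s \<in> lists (letters S) \<and> length s < length y \<and>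
     length s + length y < length w \<and> in_ncl S R (y @ winv s) \<and> in_ncl S R (x @ s @ z)"
proof -
  let ?n = "length w"
  have wl: "w \<in> lists (letters S)" using w unfolding in_ncl_def by simp
  have fin: "in_ncl S R (x @ s @ z)"
    if "w = x @ y @ z" "s \<in> lists (letters S)" "in_ncl S R (y @ winv s)" for x y z s
  proof -
    have xl: "x \<in> lists (letters S)" "z \<in> lists (letters S)" using wl that(1) by auto
    have "is_prod_conj S R (x @ s @ z) (area S R (y @ winv s) + area S R w)"
      by (rule K2[OF xl(1) area_pc[OF that(3)]]) (use area_pc[OF w] that(1) in simp)
    then show ?thesis unfolding in_ncl_def using xl that(2) by auto
  qed
  show ?thesis
  proof (cases "\<exists>p q. 1 \<le> p \<and> p \<le> q \<and> q \<le> ?n \<and> \<not> (p = 1 \<and> q = ?n) \<and> G_eq S R (subw w p q) []")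
    case True
    then obtain p q where pq: "1 \<le> p" "p \<le> q" "q \<le> ?n" "\<not> (p = 1 \<and> q = ?n)" "G_eq S R (subw w p q) []"
      by blast
    note sp = subw_split[OF pq(1-3)]
    show ?thesis
    proof (intro exI conjI)
      show "w = take (p - 1) w @ subw w p q @ drop q w" by (rule sp(1))
      show "[] \<in> lists (letters S)" by simp
      show "length [] < length (subw w p q)" using sp(2) pq by simp
      show "length [] + length (subw w p q) < ?n" using sp(2) pq len by auto
      show "in_ncl S R (subw w p q @ winv [])" using pq(5) by (simp add: G_eq_def)
      show "in_ncl S R (take (p - 1) w @ [] @ drop q w)"
        by (rule fin[OF sp(1)]) (use pq(5) in \<open>simp_all add: G_eq_def\<close>)
    qed
  next
    case False
    have "simple_rel S R w"
      unfolding simple_rel_def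
    proof (intro conjI allI impI)
      show "w \<in> lists (letters S)" by (rule wl)
      show "2 < ?n" using len by simp
      fix p q assume pq: "1 \<le> p \<and> p \<le> q \<and> q \<le> ?n"
      show "G_eq S R (subw w p q) [] \<longleftrightarrow> p = 1 \<and> q = ?n"
      proof
        assume "G_eq S R (subw w p q) []"
        then show "p = 1 \<and> q = ?n" using False pq by blast
      next
        assume "p = 1 \<and> q = ?n"
        then have "subw w p q = w" by (simp add: subw_def)
        then show "G_eq S R (subw w p q) []" using w by (simp add: G_eq_def)
      qed
    qed
    moreover have "k \<le> ?n" using len by simp
    ultimately obtain i j s where ij: "1 \<le> i" "i < j" "j \<le> ?n" "s \<in> lists (letters S)"
      "int (length s) \<le> min (int j - int i) (int ?n - int j + int i - 2)"
      "G_eq S R (subw w i j) s"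
      using ch unfolding chordal_def by blast
    note sp = subw_split[OF ij(1) less_imp_le[OF ij(2)] ij(3)]
    have l1: "length s + i \<le> j" "length s + j + 2 \<le> ?n + i" using ij(5) by auto
    show ?thesis
    proof (intro exI conjI)
      show "w = take (i - 1) w @ subw w i j @ drop j w" by (rule sp(1))
      show "s \<in> lists (letters S)" by (rule ij(4))
      show "length s < length (subw w i j)" using sp(2) l1 by simp
      show "length s + length (subw w i j) < ?n" using sp(2) l1 ij by simp
      show "in_ncl S R (subw w i j @ winv s)" using ij(6) by (simp add: G_eq_def)
      show "in_ncl S R (take (i - 1) w @ s @ drop j w)"
        by (rule fin[OF sp(1) ij(4)]) (use ij(6) in \<open>simp add: G_eq_def\<close>)
    qed
  qed
qed

lemma ncl_back:
  assumes "x @ y @ z \<in> lists (letters S)" "in_ncl S R (y @ winv s)" "in_ncl S R (x @ s @ z)"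
  shows "in_ncl S R (x @ y @ z)"
proof -
  have "is_prod_conj S R (x @ y @ z) (area S R (y @ winv s) + area S R (x @ s @ z))"
    by (rule K1[OF _ area_pc[OF assms(2)] area_pc[OF assms(3)]]) (use assms(1) in simp)
  then show ?thesis unfolding in_ncl_def using assms(1) by auto
qed

lemma dehn_bound:
  assumes fS: "finite S" and ch: "chordal S R k"
  shows "\<exists>C. \<forall>w. in_ncl S R w \<longrightarrow> area S R w \<le> C * 2 ^ length w"
proof -
  let ?K = "max k 3"
  define A where "A = {w. in_ncl S R w \<and> length w < ?K}"
  have "A \<subseteq> {w. set w \<subseteq> letters S \<and> length w \<le> ?K}"
    unfolding A_def in_ncl_def by (auto simp: in_lists_conv_set)
  moreover have "finite (letters S)" using fS unfolding letters_def by simp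
  ultimately have finA: "finite A" using finite_lists_length_le finite_subset by blast
  define C where "C = Max (insert 1 (area S R ` A))"
  have C1: "1 \<le> C" unfolding C_def using finA by simp
  have CA: "w \<in> A \<Longrightarrow> area S R w \<le> C" for w unfolding C_def using finA by simp
  have "in_ncl S R w \<longrightarrow> area S R w \<le> C * 2 ^ length w" for w
  proof (induction "length w" arbitrary: w rule: less_induct)
    case less
    show ?case
    proof
      assume w: "in_ncl S R w"
      show "area S R w \<le> C * 2 ^ length w"
      proof (cases "length w < ?K")
        case True
        then have "area S R w \<le> C" using CA w unfolding A_def by blast
        also have "C \<le> C * 2 ^ length w" by simp
        finally show ?thesis .
      next
        case False
        then obtain x y z s where d: "w = x @ y @ z" "s \<in> lists (letters S)" "length s < length y"
          "length s + length y < length w" "in_ncl S R (y @ winv s)" "in_ncl S R (x @ s @ z)"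
          using decomp[OF ch w] by (meson not_le)
        let ?p1 = "y @ winv s" and ?p2 = "x @ s @ z"
        have l1: "length ?p1 < length w" using d by simp
        have l2: "length ?p2 < length w" using d by simp
        have a1: "area S R ?p1 \<le> C * 2 ^ length ?p1" using less l1 d(5) by blast
        have a2: "area S R ?p2 \<le> C * 2 ^ length ?p2" using less l2 d(6) by blast
        have xl: "x \<in> lists (letters S)" using w d(1) unfolding in_ncl_def by simp
        have "area S R w \<le> area S R ?p1 + area S R ?p2"
          using area_le[OF K1[OF xl area_pc[OF d(5)] area_pc[OF d(6)]]] d(1) by simp
        also have "\<dots> \<le> C * 2 ^ (length w - 1) + C * 2 ^ (length w - 1)"
        proof -
          have "C * 2 ^ length ?p1 \<le> C * 2 ^ (length w - 1)"
            using l1 by (intro mult_le_mono2 power_increasing) auto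
          moreover have "C * 2 ^ length ?p2 \<le> C * 2 ^ (length w - 1)"
            using l2 by (intro mult_le_mono2 power_increasing) auto
          ultimately show ?thesis using a1 a2 by linarith
        qed
        also have "\<dots> = C * 2 ^ length w"
        proof -
          have "length w = Suc (length w - 1)" using l1 by simp
          then have "(2::nat) ^ length w = 2 * 2 ^ (length w - 1)" by (metis power_Suc)
          then show ?thesis by simp
        qed
        finally show ?thesis .
      qed
    qed
  qed
  then show ?thesis by blast
qed


declare One_nat_def [simp del]

lemma iso_part:
  assumes fS: "finite S" and ch: "chordal S R k"
  shows "\<exists>f. total_recursive f \<and> isoperimetric S R f"
proof -
  obtain Cc where Cc: "\<And>w. in_ncl S R w \<Longrightarrow> area S R w \<le> Cc * 2 ^ length w"
    using dehn_bound[OF fS ch] by blast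
  define f where "f n = Cc * 2 ^ n" for n :: nat
  have tr: "total_recursive f"
    apply (rule tot_rec)
    by (rule comp_aexp1[of "P2 (*) (C Cc) (P2 (^) (C 2) (V 0))"]) (auto simp: comp_arith f_def)
  have mono: "mono f" unfolding f_def mono_def
    by (auto intro: mult_le_mono2 power_increasing)
  have "dehn S R n \<le> f n" for n
  proof -
    let ?A = "{area S R w | w. in_ncl S R w \<and> length w \<le> n}"
    have "{w. in_ncl S R w \<and> length w \<le> n} \<subseteq> {w. set w \<subseteq> letters S \<and> length w \<le> n}"
      unfolding in_ncl_def by (auto simp: in_lists_conv_set)
    moreover have "finite (letters S)" using fS unfolding letters_def by simp
    ultimately have "finite {w. in_ncl S R w \<and> length w \<le> n}"
      using finite_lists_length_le finite_subset by blast
    moreover have "?A = area S R ` {w. in_ncl S R w \<and> length w \<le> n}" by auto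
    ultimately have finA: "finite ?A" by simp
    have "in_ncl S R []" unfolding in_ncl_def using pc_zero by auto
    then have neA: "?A \<noteq> {}" by auto
    have "\<forall>a\<in>?A. a \<le> f n"
    proof
      fix a assume "a \<in> ?A"
      then obtain w where w: "a = area S R w" "in_ncl S R w" "length w \<le> n" by blast
      have "a \<le> Cc * 2 ^ length w" using Cc w by simp
      also have "\<dots> \<le> f n" unfolding f_def using w(3) by (intro mult_le_mono2 power_increasing) auto
      finally show "a \<le> f n" .
    qed
    then show ?thesis unfolding dehn_def using finA neA by (simp add: Max.boundedI)
  qed
  then show ?thesis using tr mono unfolding isoperimetric_def by blast
qed

lemma wp_part:
  assumes fS: "finite S" and ch: "chordal S R k" and idx: "inj_on idx S"
  shows "decidable_set (word_code idx ` {w. in_ncl S R w})"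
proof -
  define lc :: "'a \<times> bool \<Rightarrow> nat" where "lc = (\<lambda>(a, b). 2 * idx a + (if b then 1 else 0))"
  define L where "L = lc ` letters S"
  define B where "B = Max (insert 1 L) + 1"
  define dl where "dl = inv_into (letters S) lc"
  define TW where "TW ds = in_ncl S R (map dl ds)" for ds
  define K where "K = max k 3"
  have finlet: "finite (letters S)" using fS unfolding letters_def by simp
  have Lfin: "finite L" unfolding L_def using finlet by simp
  have injlc: "inj_on lc (letters S)"
  proof (rule inj_onI)
    fix x y assume xy: "x \<in> letters S" "y \<in> letters S" "lc x = lc y"
    obtain a b where x: "x = (a, b)" by (cases x) auto
    obtain a' b' where y: "y = (a', b')" by (cases y) auto
    have "b = b'" using xy(3) unfolding x y lc_def by (cases b; cases b'; simp; presburger)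
    then have "idx a = idx a'" using xy(3) unfolding x y lc_def by simp
    then have "a = a'" using idx xy(1,2) x y unfolding letters_def by (auto dest: inj_onD)
    then show "x = y" using x y \<open>b = b'\<close> by simp
  qed
  have dl_lc: "x \<in> letters S \<Longrightarrow> dl (lc x) = x" for x
    unfolding dl_def using injlc by simp
  have lc_dl: "d \<in> L \<Longrightarrow> lc (dl d) = d \<and> dl d \<in> letters S" for d
    unfolding dl_def L_def by (auto intro: f_inv_into_f inv_into_into)
  have map1: "w \<in> lists (letters S) \<Longrightarrow> map dl (map lc w) = w" for w
    using dl_lc by (induction w) auto
  have map2: "set ds \<subseteq> L \<Longrightarrow> map lc (map dl ds) = ds \<and> map dl ds \<in> lists (letters S)" for ds
    using lc_dl by (induction ds) auto
  have map3: "w \<in> lists (letters S) \<Longrightarrow> set (map lc w) \<subseteq> L" for w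
    unfolding L_def by auto
  have lc_flip: "lc (flip x) = flN (lc x)" for x
    by (cases x) (auto simp: lc_def flip_def flN_def)
  have lc_winv: "map lc (winv w) = rev (map flN (map lc w))" for w
    unfolding winv_def by (simp add: rev_map lc_flip comp_def)
  have B2: "2 \<le> B" unfolding B_def using Lfin by simp
  have LB: "\<forall>d\<in>L. d < B"
  proof
    fix d assume "d \<in> L"
    then have "d \<le> Max (insert 1 L)" using Lfin by simp
    then show "d < B" unfolding B_def by simp
  qed
  have Lfl: "\<forall>d\<in>L. flN d \<in> L"
  proof
    fix d assume "d \<in> L"
    then obtain x where x: "x \<in> letters S" "d = lc x" unfolding L_def by blast
    then have "flN d = lc (flip x)" using lc_flip by simp
    then show "flN d \<in> L" using letters_flip[OF x(1)] unfolding L_def by simp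
  qed
  have back_dl: "set es \<subseteq> L \<Longrightarrow> map dl (rev (map flN es)) = winv (map dl es)" for es
  proof -
    assume es: "set es \<subseteq> L"
    then have "rev (map flN es) = map lc (winv (map dl es))"
      using map2[OF es] lc_winv by metis
    then show ?thesis using map1[OF winv_lists[OF conjunct2[OF map2[OF es]]]] by simp
  qed
  interpret W: wp B K L TW
  proof
    show "2 \<le> B" by (rule B2)
    show "finite L" by (rule Lfin)
    show "\<forall>d\<in>L. d < B" by (rule LB)
    show "\<forall>d\<in>L. flN d \<in> L" by (rule Lfl)
  next
    fix ds assume ds: "set ds \<subseteq> L" "K \<le> length ds" "TW ds"
    let ?w = "map dl ds"
    have w: "in_ncl S R ?w" "max k 3 \<le> length ?w" using ds unfolding TW_def K_def by auto
    obtain x y z s where d: "?w = x @ y @ z" "s \<in> lists (letters S)" "length s < length y"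
      "length s + length y < length ?w" "in_ncl S R (y @ winv s)" "in_ncl S R (x @ s @ z)"
      using decomp[OF ch w] by blast
    have wl: "?w \<in> lists (letters S)" using map2[OF ds(1)] by simp
    then have xl: "x \<in> lists (letters S)" "y \<in> lists (letters S)" "z \<in> lists (letters S)"
      using d(1) by auto
    show "\<exists>xs ys zs es. ds = xs @ ys @ zs \<and> set es \<subseteq> L \<and> length es < length ys \<and>
         length es + length ys < length ds \<and> TW (ys @ rev (map flN es)) \<and> TW (xs @ es @ zs)"
    proof (intro exI conjI)
      show "ds = map lc x @ map lc y @ map lc z"
        using map2[OF ds(1)] d(1) by (metis map_append)
      show "set (map lc s) \<subseteq> L" using map3[OF d(2)] .
      show "length (map lc s) < length (map lc y)" using d(3) by simp
      show "length (map lc s) + length (map lc y) < length ds" using d(4) by simp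
      have "map dl (map lc y @ rev (map flN (map lc s))) = y @ winv s"
        using map1[OF xl(2)] map1[OF winv_lists[OF d(2)]] lc_winv[of s] by simp
      then show "TW (map lc y @ rev (map flN (map lc s)))" unfolding TW_def using d(5) by simp
      have "map dl (map lc x @ map lc s @ map lc z) = x @ s @ z"
        using map1[OF xl(1)] map1[OF xl(3)] map1[OF d(2)] by simp
      then show "TW (map lc x @ map lc s @ map lc z)" unfolding TW_def using d(6) by simp
    qed
  next
    fix xs ys zs es
    assume a: "set (xs @ ys @ zs) \<subseteq> L" "set es \<subseteq> L" "TW (ys @ rev (map flN es))" "TW (xs @ es @ zs)"
    have l: "map dl (xs @ ys @ zs) \<in> lists (letters S)" using map2[OF a(1)] by simp
    have "in_ncl S R (map dl ys @ winv (map dl es))" using a(3) back_dl[OF a(2)] unfolding TW_def by simp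
    moreover have "in_ncl S R (map dl xs @ map dl es @ map dl zs)" using a(4) unfolding TW_def by simp
    ultimately have "in_ncl S R (map dl xs @ map dl ys @ map dl zs)"
      using ncl_back l by simp
    then show "TW (xs @ ys @ zs)" unfolding TW_def by simp
  qed
  let ?A = "word_code idx ` {w. in_ncl S R w}"
  have wc: "word_code idx w = list_encode (map lc w)" for w
    unfolding word_code_def lc_def ..
  have memA: "c \<in> ?A \<longleftrightarrow> set (list_decode c) \<subseteq> L \<and> TW (list_decode c)" for c
  proof
    assume "c \<in> ?A"
    then obtain w where w: "in_ncl S R w" "c = list_encode (map lc w)" using wc by auto
    have wl: "w \<in> lists (letters S)" using w(1) unfolding in_ncl_def by simp
    have "list_decode c = map lc w" using w(2) by simp
    then show "set (list_decode c) \<subseteq> L \<and> TW (list_decode c)"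
      using map3[OF wl] map1[OF wl] w(1) unfolding TW_def by simp
  next
    assume h: "set (list_decode c) \<subseteq> L \<and> TW (list_decode c)"
    let ?w = "map dl (list_decode c)"
    have "in_ncl S R ?w" using h unfolding TW_def by simp
    moreover have "word_code idx ?w = c" using map2 h wc by simp
    ultimately show "c \<in> ?A" by (metis (mono_tags, lifting) image_eqI mem_Collect_eq)
  qed
  have eq: "decN B K W.Q W.Q0 = (\<lambda>c. if c \<in> ?A then 1 else 0)"
  proof
    fix c
    show "decN B K W.Q W.Q0 c = (if c \<in> ?A then 1 else 0)"
      using W.decN_iff[of c] memA[of c] unfolding decN_def by (auto split: if_splits)
  qed
  show ?thesis unfolding decidable_set_def using comp_decN[of B K W.Q W.Q0] eq by simp
qed

theorem theorem15:
  fixes S :: "'a set" and R :: "'a word set"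
  assumes "finite S" and "finite R" and "R \<subseteq> lists (letters S)"
    and "\<exists>k. chordal S R k"
  shows "(\<exists>f. total_recursive f \<and> isoperimetric S R f) \<and> solvable_word_problem S R"
proof -
  obtain k where ch: "chordal S R k" using assms(4) by blast
  show ?thesis
    using iso_part[OF assms(1) ch] wp_part[OF assms(1) ch] unfolding solvable_word_problem_def by blast
qed


end
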